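(* Let $\alpha,\gamma,\kappa$ be constants and $n=2^t$ such that $$7n^2 \frac{(\gamma n)^{\kappa n}}{(\kappa n)!} +3n^3\frac{(2\gamma n)^{(1-\alpha-2\gamma)n/3}}{((1-\alpha-2\gamma)n/3)!} < 1.$$ Then for any $(\gamma n,\gamma n,\gamma n,\gamma n)$-cube $A$ of order $n$ there is a quadruple $\sigma=(\tau_1,\tau_2,\tau_3,\tau_4)$ of permutations of $[n]$ (acting on the row layers, column layers, file layers and symbols, respectively) such that the Latin cube $L$ obtained by applying $\sigma$ to the Boolean Latin cube $B$ of order $n$ satisfies: (a) no row of $L$ contains more than $\kappa n$ conflicts with $A$; (b) no column of $L$ contains more than $\kappa n$ conflicts with $A$; (c) no file of $L$ contains more than $\kappa n$ conflicts with $A$; (d) no symbol-set of $L$ contains more than $\kappa n$ conflicts with $A$; (e) no transversal-set of $L$ contains more than $\kappa n$ conflicts with $A$; (f) each cell of $L$ belongs to at least $\alpha n$ allowed $3$-cubes of $L$.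
   Context: Cells of a cube of order $n$ are triples $(i,j,k)\in[n]^3$. A row is $\{(i,j^*,k):j^*\in[n]\}$, a column $\{(i^*,j,k):i^*\in[n]\}$, a file $\{(i,j,k^* ):k^*\in[n]\}$. Row layer $i$ is $\{(i,j^*,k^* )\}$, column layer $j$ is $\{(i^*,j,k^* )\}$, file layer $k$ is $\{(i^*,j^*,k)\}$. An $(m,m,m,m)$-cube of order $n$ is a cube $A$ with $A(i,j,k)\subseteq[n]$ for each cell, each cell containing at most $m$ symbols and each symbol occurring at most $m$ times in each row, each column and each file. A Latin cube $L$ of order $n$ has one symbol $L(i,j,k)\in[n]$ in each cell with each symbol exactly once in every row, column and file. Let $a_x$ be the $x$-th smallest element of $\mathbb{Z}_2^t$ (in the natural order of binary strings), $x=1,\dots,2^t$. The Boolean Latin cube $B$ of order $n=2^t$ has $B(i,j,k)=x$ where $a_x=a_i+a_j+a_k$ in $\mathbb{Z}_2^t$. Applying $\sigma=(\tau_1,\tau_2,\tau_3,\tau_4)$ to $B$ gives $L$ with $L(\tau_1(i),\tau_2(j),\tau_3(k))=\tau_4(B(i,j,k))$. A conflict of $L$ with $A$ is a cell with $L(i,j,k)\in A(i,j,k)$. A symbol-set of $L$ is the set of all cells in a given row layer, column layer or file layer of $L$ that contain a given symbol. A $3$-cube in $L$ is a set of eight cells $\{(i_a,j_b,k_c): a,b,c\in\{1,2\}\}$ with $i_1\ne i_2$, $j_1\neq j_2$, $k_1\ne k_2$, such that $L(i_1,j_1,k_1)=L(i_2,j_2,k_1)=L(i_1,j_2,k_2)=L(i_2,j_1,k_2)=x_1$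 and $L(i_1,j_2,k_1)=L(i_2,j_1,k_1)=L(i_1,j_1,k_2)=L(i_2,j_2,k_2)=x_2$. A swap on this $3$-cube replaces $x_1$ by $x_2$ and $x_2$ by $x_1$ in these eight cells (leaving all other cells unchanged), producing another Latin cube. A $3$-cube is allowed if after swapping on it none of its eight cells is a conflict. A transversal-set of $L$ is a set of $n$ cells no two in the same row, column or file, no two containing the same symbol, and such that any two of its cells lie in a unique common $3$-cube. Following the paper's convention, floors/ceilings are omitted, so quantities like $\gamma n$, $\kappa n$, $(1-\alpha-2\gamma)n/3$ are treated as integers. *)

theory Defs
  imports Complex_Main "HOL-Combinatorics.Permutations"
begin

type_synonym cell = "nat \<times> nat \<times> nat"

definition cells :: "nat \<Rightarrow> cell set" where
  "cells n = {1..n} \<times> {1..n} \<times> {1..n}"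

definition mcube :: "nat \<Rightarrow> nat \<Rightarrow> (cell \<Rightarrow> nat set) \<Rightarrow> bool" where
  "mcube n m A \<longleftrightarrow>
     (\<forall>c\<in>cells n. A c \<subseteq> {1..n} \<and> card (A c) \<le> m) \<and>
     (\<forall>i\<in>{1..n}. \<forall>k\<in>{1..n}. \<forall>s. card {j\<in>{1..n}. s \<in> A (i,j,k)} \<le> m) \<and>
     (\<forall>j\<in>{1..n}. \<forall>k\<in>{1..n}. \<forall>s. card {i\<in>{1..n}. s \<in> A (i,j,k)} \<le> m) \<and>
     (\<forall>i\<in>{1..n}. \<forall>j\<in>{1..n}. \<forall>s. card {k\<in>{1..n}. s \<in> A (i,j,k)} \<le> m)"

text \<open>Boolean Latin cube of order 2^t: a_x is the binary representation of x-1,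
  so B(i,j,k) = ((i-1) xor (j-1) xor (k-1)) + 1.\<close>
definition boolean_cube :: "cell \<Rightarrow> nat" where
  "boolean_cube c = (case c of (i,j,k) \<Rightarrow> xor (xor (i-1) (j-1)) (k-1) + 1)"

text \<open>L(tau1 i, tau2 j, tau3 k) = tau4 (B(i,j,k)).\<close>
definition apply_sigma ::
  "(nat \<Rightarrow> nat) \<Rightarrow> (nat \<Rightarrow> nat) \<Rightarrow> (nat \<Rightarrow> nat) \<Rightarrow> (nat \<Rightarrow> nat) \<Rightarrow> (cell \<Rightarrow> nat) \<Rightarrow> cell \<Rightarrow> nat" where
  "apply_sigma \<tau>1 \<tau>2 \<tau>3 \<tau>4 B c =
     (case c of (i,j,k) \<Rightarrow> \<tau>4 (B (inv \<tau>1 i, inv \<tau>2 j, inv \<tau>3 k)))"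

definition conflicts :: "nat \<Rightarrow> (cell \<Rightarrow> nat) \<Rightarrow> (cell \<Rightarrow> nat set) \<Rightarrow> cell set" where
  "conflicts n L A = {c\<in>cells n. L c \<in> A c}"

definition rows :: "nat \<Rightarrow> cell set set" where
  "rows n = {{(i,j',k) | j'. j'\<in>{1..n}} | i k. i\<in>{1..n} \<and> k\<in>{1..n}}"
definition columns :: "nat \<Rightarrow> cell set set" where
  "columns n = {{(i',j,k) | i'. i'\<in>{1..n}} | j k. j\<in>{1..n} \<and> k\<in>{1..n}}"
definition files :: "nat \<Rightarrow> cell set set" where
  "files n = {{(i,j,k') | k'. k'\<in>{1..n}} | i j. i\<in>{1..n} \<and> j\<in>{1..n}}"

definition symbol_sets :: "nat \<Rightarrow> (cell \<Rightarrow> nat) \<Rightarrow> cell set set" where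
  "symbol_sets n L =
     {{c\<in>cells n. fst c = i \<and> L c = s} | i s. i\<in>{1..n} \<and> s\<in>{1..n}} \<union>
     {{c\<in>cells n. fst (snd c) = j \<and> L c = s} | j s. j\<in>{1..n} \<and> s\<in>{1..n}} \<union>
     {{c\<in>cells n. snd (snd c) = k \<and> L c = s} | k s. k\<in>{1..n} \<and> s\<in>{1..n}}"

definition is_3cube :: "nat \<Rightarrow> (cell \<Rightarrow> nat) \<Rightarrow> cell set \<Rightarrow> bool" where
  "is_3cube n L C \<longleftrightarrow>
     (\<exists>i1\<in>{1..n}. \<exists>i2\<in>{1..n}. \<exists>j1\<in>{1..n}. \<exists>j2\<in>{1..n}. \<exists>k1\<in>{1..n}. \<exists>k2\<in>{1..n}.
      \<exists>x1 x2. i1 \<noteq> i2 \<and> j1 \<noteq> j2 \<and> k1 \<noteq> k2 \<and>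
        C = {i1,i2} \<times> {j1,j2} \<times> {k1,k2} \<and>
        L (i1,j1,k1) = x1 \<and> L (i2,j2,k1) = x1 \<and> L (i1,j2,k2) = x1 \<and> L (i2,j1,k2) = x1 \<and>
        L (i1,j2,k1) = x2 \<and> L (i2,j1,k1) = x2 \<and> L (i1,j1,k2) = x2 \<and> L (i2,j2,k2) = x2)"

definition swap3 :: "(cell \<Rightarrow> nat) \<Rightarrow> cell set \<Rightarrow> cell \<Rightarrow> nat" where
  "swap3 L C c = (if c \<in> C then (THE y. y \<in> L ` C \<and> y \<noteq> L c) else L c)"

definition allowed_3cube :: "nat \<Rightarrow> (cell \<Rightarrow> nat) \<Rightarrow> (cell \<Rightarrow> nat set) \<Rightarrow> cell set \<Rightarrow> bool" where
  "allowed_3cube n L A C \<longleftrightarrow> is_3cube n L C \<and> (\<forall>c\<in>C. swap3 L C c \<notin> A c)"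

definition transversal_set :: "nat \<Rightarrow> (cell \<Rightarrow> nat) \<Rightarrow> cell set \<Rightarrow> bool" where
  "transversal_set n L T \<longleftrightarrow> T \<subseteq> cells n \<and> card T = n \<and>
     (\<forall>c\<in>T. \<forall>d\<in>T. c \<noteq> d \<longrightarrow>
        \<not> (fst c = fst d \<and> snd (snd c) = snd (snd d)) \<and>
        \<not> (fst (snd c) = fst (snd d) \<and> snd (snd c) = snd (snd d)) \<and>
        \<not> (fst c = fst d \<and> fst (snd c) = fst (snd d)) \<and>
        L c \<noteq> L d \<and>
        (\<exists>!C. is_3cube n L C \<and> c \<in> C \<and> d \<in> C))"

end

theory Submission
  imports Defs
begin


definition bx :: "nat \<Rightarrow> nat \<Rightarrow> nat" where
  "bx x y = xor (x - 1) (y - 1) + 1"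

lemma bx_ge1: "bx x y \<ge> 1" by (simp add: bx_def)

lemma bx_range:
  assumes "x \<in> {1..(2::nat)^t}" "y \<in> {1..(2::nat)^t}"
  shows "bx x y \<in> {1..2^t}"
proof -
  have "x - 1 < 2^t" "y - 1 < 2^t" using assms by auto
  hence "take_bit t (x-1) = x - 1" "take_bit t (y-1) = y-1"
    by (simp_all add: take_bit_nat_eq_self_iff)
  hence "take_bit t (xor (x-1) (y-1)) = xor (x-1) (y-1)" by (simp add: take_bit_xor)
  hence "xor (x-1) (y-1) < 2^t" by (metis take_bit_nat_less_exp)
  thus ?thesis by (simp add: bx_def)
qed

lemma bx_comm: "bx x y = bx y x" by (simp add: bx_def xor.commute)
lemma bx_assoc: "bx (bx x y) z = bx x (bx y z)" by (simp add: bx_def xor.assoc)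
lemma bx_self: "bx x x = 1" by (simp add: bx_def)
lemma bx_one: "x \<ge> 1 \<Longrightarrow> bx x 1 = x" by (simp add: bx_def)
lemma bx_cancel: "y \<ge> 1 \<Longrightarrow> bx x (bx x y) = y"
  by (simp add: bx_def xor.assoc[symmetric])
lemma bx_inj: "y \<ge> 1 \<Longrightarrow> y' \<ge> 1 \<Longrightarrow> bx x y = bx x y' \<Longrightarrow> y = y'"
  by (metis bx_cancel)
lemma bx_eq1: "x \<ge> 1 \<Longrightarrow> y \<ge> 1 \<Longrightarrow> bx x y = 1 \<longleftrightarrow> x = y"
  by (metis bx_cancel bx_one bx_self)

lemma boolean_cube_bx: "boolean_cube (i,j,k) = bx (bx i j) k"
  by (simp add: boolean_cube_def bx_def)


lemma permutes_fix_minus: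
  assumes "\<tau> permutes U" "\<tau> p = p"
  shows "\<tau> permutes (U - {p})"
  using assms unfolding permutes_def by auto

lemma perm_constr_card:
  assumes "finite U" "K \<subseteq> U" "\<forall>q\<in>K. finite (S q) \<and> card (S q) \<le> b q"
  shows "card {\<tau>. \<tau> permutes U \<and> (\<forall>q\<in>K. \<tau> q \<in> S q)} \<le> prod b K * fact (card U - card K)"
proof -
  have "finite K" using assms(1,2) finite_subset by blast
  thus ?thesis using assms
  proof (induction K arbitrary: U S rule: finite_induct)
    case empty
    then show ?case by (simp add: card_permutations)
  next
    case (insert p K)
    let ?X = "{\<tau>. \<tau> permutes U \<and> (\<forall>q\<in>insert p K. \<tau> q \<in> S q)}"
    define X where "X v = {\<tau>. \<tau> permutes U \<and> (\<forall>q\<in>insert p K. \<tau> q \<in> S q) \<and> \<tau> p = v}" for v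
    have pU: "p \<in> U" and KU: "K \<subseteq> U - {p}" using insert by auto
    have sub: "?X \<subseteq> (\<Union>v\<in>S p \<inter> U. X v)"
      unfolding X_def using permutes_in_image pU by fastforce
    have bnd: "card (X v) \<le> prod b K * fact (card U - 1 - card K)" if v: "v \<in> U" for v
    proof -
      let ?t = "transpose v p"
      define S' where "S' q = ?t ` S q" for q
      have IH: "card {\<tau>. \<tau> permutes (U - {p}) \<and> (\<forall>q\<in>K. \<tau> q \<in> S' q)}
          \<le> prod b K * fact (card (U - {p}) - card K)"
        apply (rule insert.IH)
        using insert.prems KU by (auto simp: S'_def card_image inj_transpose)
      have "((\<circ>) ?t) ` X v \<subseteq> {\<tau>. \<tau> permutes (U - {p}) \<and> (\<forall>q\<in>K. \<tau> q \<in> S' q)}"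
      proof
        fix \<sigma> assume "\<sigma> \<in> ((\<circ>) ?t) ` X v"
        then obtain \<tau> where \<tau>: "\<tau> \<in> X v" "\<sigma> = ?t \<circ> \<tau>" by auto
        have "\<sigma> permutes U" using \<tau> unfolding X_def
          by (simp add: permutes_compose permutes_swap_id pU v)
        moreover have "\<sigma> p = p" using \<tau> unfolding X_def by simp
        ultimately have "\<sigma> permutes (U - {p})" by (rule permutes_fix_minus)
        moreover have "\<forall>q\<in>K. \<sigma> q \<in> S' q" using \<tau> unfolding X_def S'_def by auto
        ultimately show "\<sigma> \<in> {\<tau>. \<tau> permutes (U - {p}) \<and> (\<forall>q\<in>K. \<tau> q \<in> S' q)}" by simp
      qed
      moreover have "inj_on ((\<circ>) ?t) (X v)"
        by (rule inj_onI) (metis comp_assoc transpose_comp_involutory id_comp)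
      ultimately have "card (X v) \<le> card {\<tau>. \<tau> permutes (U - {p}) \<and> (\<forall>q\<in>K. \<tau> q \<in> S' q)}"
        by (metis (no_types, lifting) card_image card_mono finite_permutations insert.prems(1)
            finite_Diff mem_Collect_eq rev_finite_subset subsetI)
      also have "\<dots> \<le> prod b K * fact (card U - 1 - card K)"
        using IH pU insert.prems(1) by simp
      finally show ?thesis .
    qed
    have finX: "finite (X v)" for v
      by (rule finite_subset[OF _ finite_permutations[OF insert.prems(1)]]) (auto simp: X_def)
    have "card ?X \<le> card (\<Union>v\<in>S p \<inter> U. X v)"
      apply (rule card_mono) using insert.prems(1) sub finX by auto
    also have "\<dots> \<le> (\<Sum>v\<in>S p \<inter> U. card (X v))" by (rule card_UN_le) (use insert.prems finX in auto)
    also have "\<dots> \<le> (\<Sum>v\<in>S p \<inter> U. prod b K * fact (card U - 1 - card K))"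
      by (rule sum_mono) (use bnd in auto)
    also have "\<dots> = card (S p \<inter> U) * (prod b K * fact (card U - 1 - card K))" by simp
    also have "\<dots> \<le> b p * (prod b K * fact (card U - 1 - card K))"
    proof -
      have "card (S p \<inter> U) \<le> card (S p)" using insert.prems by (intro card_mono) auto
      also have "\<dots> \<le> b p" using insert.prems by auto
      finally show ?thesis by (rule mult_right_mono) simp
    qed
    also have "\<dots> = prod b (insert p K) * fact (card U - card (insert p K))"
      using insert.hyps by simp
    finally show ?case .
  qed
qed


lemma perm_count_bound:
  fixes U :: "nat set" and D :: "'x set"
  assumes U: "finite U" and hinj: "inj_on h D" and hD: "h ` D \<subseteq> U - F" and FU: "F \<subseteq> U"
    and S: "\<forall>x\<in>D. finite (S x) \<and> card (S x) \<le> g"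
    and T: "\<forall>q\<in>F. finite (T q) \<and> card (T q) \<le> 1"
  shows "real (card {\<tau>. \<tau> permutes U \<and> (\<forall>q\<in>F. \<tau> q \<in> T q) \<and> card {x\<in>D. \<tau> (h x) \<in> S x} \<ge> k})
         \<le> fact (card U - card F) * real g ^ k / fact k"
proof -
  let ?E = "{\<tau>. \<tau> permutes U \<and> (\<forall>q\<in>F. \<tau> q \<in> T q) \<and> card {x\<in>D. \<tau> (h x) \<in> S x} \<ge> k}"
  let ?N = "card U - card F"
  have finD: "finite D" using hD U hinj finite_image_iff
    by (metis finite_Diff finite_subset)
  have cardD: "card D \<le> ?N"
  proof -
    have "card D = card (h ` D)" using hinj by (simp add: card_image)
    also have "\<dots> \<le> card (U - F)" using hD U by (intro card_mono) auto
    also have "\<dots> = ?N" using FU U by (simp add: card_Diff_subset finite_subset)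
    finally show ?thesis .
  qed
  show ?thesis
  proof (cases "k \<le> card D")
    case False
    have "?E = {}"
    proof (rule ccontr)
      assume "?E \<noteq> {}"
      then obtain \<tau> where "card {x\<in>D. \<tau> (h x) \<in> S x} \<ge> k" by auto
      moreover have "card {x\<in>D. \<tau> (h x) \<in> S x} \<le> card D" using finD by (intro card_mono) auto
      ultimately show False using False by simp
    qed
    hence "card ?E = 0" by (metis card.empty)
    thus ?thesis by simp
  next
    case True
    define S2 where "S2 q = (if q \<in> F then T q else S (inv_into D h q))" for q
    define b where "b q = (if q \<in> F then 1 else g)" for q
    define Y where "Y K = {\<tau>. \<tau> permutes U \<and> (\<forall>q\<in>F \<union> h ` K. \<tau> q \<in> S2 q)}" for K
    have sub: "?E \<subseteq> (\<Union>K\<in>{K. K \<subseteq> D \<and> card K = k}. Y K)"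
    proof
      fix \<tau> assume "\<tau> \<in> ?E"
      hence \<tau>: "\<tau> permutes U" "\<forall>q\<in>F. \<tau> q \<in> T q" "card {x\<in>D. \<tau> (h x) \<in> S x} \<ge> k" by auto
      obtain K where K: "K \<subseteq> {x\<in>D. \<tau> (h x) \<in> S x}" "card K = k"
        using obtain_subset_with_card_n[OF \<tau>(3)] by blast
      have "\<tau> \<in> Y K"
      proof -
        have "\<tau> q \<in> S2 q" if qin: "q \<in> F \<union> h ` K" for q
        proof (cases "q \<in> F")
          case True thus ?thesis using \<tau>(2) by (simp add: S2_def)
        next
          case False
          then obtain x where x: "x \<in> K" "q = h x" using qin by auto
          have "x \<in> D" using K x by auto
          hence "inv_into D h q = x" using x hinj by simp
          thus ?thesis using False K x by (auto simp: S2_def)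
        qed
        thus ?thesis using \<tau> by (simp add: Y_def)
      qed
      thus "\<tau> \<in> (\<Union>K\<in>{K. K \<subseteq> D \<and> card K = k}. Y K)" using K by auto
    qed
    have bndY: "card (Y K) \<le> g ^ k * fact (?N - k)" if K: "K \<subseteq> D" "card K = k" for K
    proof -
      have disj: "F \<inter> h ` K = {}" using hD K by auto
      have cK: "card (h ` K) = k" using K hinj by (simp add: card_image inj_on_subset)
      have finK: "finite K" using K finD finite_subset by blast
      have "card (Y K) \<le> prod b (F \<union> h ` K) * fact (card U - card (F \<union> h ` K))"
        unfolding Y_def
      proof (rule perm_constr_card[OF U])
        show "F \<union> h ` K \<subseteq> U" using FU hD K by auto
        show "\<forall>q\<in>F \<union> h ` K. finite (S2 q) \<and> card (S2 q) \<le> b q"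
        proof
          fix q assume q: "q \<in> F \<union> h ` K"
          show "finite (S2 q) \<and> card (S2 q) \<le> b q"
          proof (cases "q \<in> F")
            case True thus ?thesis using T by (simp add: S2_def b_def)
          next
            case False
            then obtain x where x: "x \<in> K" "q = h x" using q by auto
            have "x \<in> D" using K x by auto
            hence "inv_into D h q = x" using x hinj by simp
            thus ?thesis using False S \<open>x \<in> D\<close> by (simp add: S2_def b_def)
          qed
        qed
      qed
      also have "prod b (F \<union> h ` K) = g ^ k"
      proof -
        have finF: "finite F" using FU U finite_subset by blast
        have "prod b (F \<union> h ` K) = prod b F * prod b (h ` K)"
          using disj finF finK by (simp add: prod.union_disjoint)
        also have "prod b F = 1" by (simp add: b_def)
        also have "prod b (h ` K) = g ^ k" using disj cK
          by (subst prod.cong[of _ _ _ "\<lambda>_. g"]) (auto simp: b_def)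
        finally show ?thesis by simp
      qed
      also have "card U - card (F \<union> h ` K) = ?N - k"
      proof -
        have finF: "finite F" using FU U finite_subset by blast
        have "card (F \<union> h ` K) = card F + k" using disj cK finF finK by (simp add: card_Un_disjoint)
        thus ?thesis by simp
      qed
      finally show ?thesis .
    qed
    have finY: "finite (Y K)" for K
      by (rule finite_subset[OF _ finite_permutations[OF U]]) (auto simp: Y_def)
    have "card ?E \<le> card (\<Union>K\<in>{K. K \<subseteq> D \<and> card K = k}. Y K)"
      by (rule card_mono) (use sub finY finD in auto)
    also have "\<dots> \<le> (\<Sum>K\<in>{K. K \<subseteq> D \<and> card K = k}. card (Y K))"
      by (rule card_UN_le) (use finD in auto)
    also have "\<dots> \<le> (\<Sum>K\<in>{K. K \<subseteq> D \<and> card K = k}. g ^ k * fact (?N - k))"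
      by (rule sum_mono) (use bndY in auto)
    also have "\<dots> = (card D choose k) * (g ^ k * fact (?N - k))"
      using n_subsets[OF finD] by simp
    also have "\<dots> \<le> (?N choose k) * (g ^ k * fact (?N - k))"
      by (intro mult_right_mono binomial_right_mono[OF cardD]) simp
    finally have c: "real (card ?E) \<le> real (?N choose k) * (real g ^ k * fact (?N - k))"
      by (metis (mono_tags, lifting) of_nat_fact of_nat_le_iff of_nat_mult of_nat_power)
    have kN: "k \<le> ?N" using True cardD by simp
    have eq: "real (?N choose k) * fact (?N - k) = fact ?N / fact k"
    proof -
      have "real (fact k * fact (?N - k) * (?N choose k)) = real (fact ?N)"
        using binomial_fact_lemma[OF kN] by simp
      hence "fact k * (real (?N choose k) * fact (?N - k)) = fact ?N"
        by (simp add: algebra_simps)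
      thus ?thesis by (simp add: field_simps)
    qed
    hence "real (?N choose k) * (real g ^ k * fact (?N - k)) = real g ^ k * (fact ?N / fact k)"
      by (metis mult.left_commute)
    with c show ?thesis by (simp add: mult.commute)
  qed
qed


lemma R0: fixes x :: real assumes "x \<ge> 0" shows "(1+x)^m * (1 - m*x) \<le> 1"
proof (induction m)
  case 0 then show ?case by simp
next
  case (Suc m)
  have "(1+x)^(Suc m) * (1 - Suc m * x) = (1+x)^m * ((1+x) * (1 - m*x - x))"
    by (simp add: algebra_simps)
  also have "(1+x) * (1 - m*x - x) = (1 - m*x) - (m+1)*x^2"
    by (simp add: algebra_simps power2_eq_square)
  also have "(1+x)^m * ((1 - m*x) - (m+1)*x^2) \<le> (1+x)^m * (1 - m*x)"
    using assms by (intro mult_left_mono) auto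
  finally show ?case using Suc by linarith
qed

lemma R3: fixes g r :: nat assumes "4*g \<le> r" shows "r^(2*g) \<le> 2^r * g^(2*g)"
  using assms
proof (induction r rule: dec_induct)
  case base
  have f: "(4::nat)^(2*g) = 2^(4*g)"
  proof -
    have "(4::nat)^(2*g) = (2^2)^(2*g)" by simp
    also have "\<dots> = 2^(2*(2*g))" by (simp only: power_mult)
    finally show ?thesis by simp
  qed
  have "(4*g)^(2*g) = (2::nat)^(4*g) * g^(2*g)"
    by (simp only: power_mult_distrib f)
  then show ?case by (rule eq_imp_le)
next
  case (step r)
  show ?case
  proof (cases "g = 0")
    case True then show ?thesis by simp
  next
    case False
    hence rpos: "r > 0" using step by simp
    let ?x = "1 / real r"
    have "(1 + ?x)^(2*g) * (1 - (2*g) * ?x) \<le> 1" using R0[of ?x "2*g"] by simp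
    moreover have "1 - (2*g) * ?x \<ge> 1/2" using step.hyps rpos by (simp add: field_simps)
    ultimately have h: "(1 + ?x)^(2*g) \<le> 2"
    proof -
      assume a: "(1 + ?x)^(2*g) * (1 - (2*g) * ?x) \<le> 1" "1 - (2*g) * ?x \<ge> 1/2"
      have "(1 + ?x)^(2*g) * (1/2) \<le> (1 + ?x)^(2*g) * (1 - (2*g) * ?x)"
        using a(2) by (intro mult_left_mono) auto
      thus ?thesis using a(1) by linarith
    qed
    have "real (Suc r)^(2*g) = real r^(2*g) * (1 + ?x)^(2*g)"
      using rpos by (simp add: field_simps power_mult_distrib[symmetric])
    also have "\<dots> \<le> real r^(2*g) * 2" using h by (intro mult_left_mono) auto
    finally have "real (Suc r)^(2*g) \<le> 2 * real (r^(2*g))" by simp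
    also have "\<dots> \<le> 2 * real (2^r * g^(2*g))" using step.IH by (simp only: of_nat_le_iff mult_le_cancel_left) simp
    finally have "real (Suc r ^ (2*g)) \<le> real (2^(Suc r) * g^(2*g))" by simp
    thus ?thesis by (simp only: of_nat_le_iff)
  qed
qed

lemma R1: "fact r \<le> ((real r + 1)/2)^r"
proof (induction r)
  case 0 then show ?case by simp
next
  case (Suc r)
  have b: "2 \<le> (1 + 1/(real r + 1))^(r+1)"
    using Bernoulli_inequality[of "1/(real r+1)" "r+1"] by (simp add: field_simps)
  have e1: "1 + 1/(real r + 1) = (real r + 2)/(real r + 1)" by (simp add: field_simps)
  have "(real r + 2)^(r+1) = (real r + 1)^(r+1) * (1 + 1/(real r + 1))^(r+1)"
    unfolding e1 power_divide by simp
  also have "\<dots> \<ge> (real r + 1)^(r+1) * 2" using b by (intro mult_left_mono) auto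
  finally have k: "2 * (real r + 1)^(r+1) \<le> (real r + 2)^(r+1)" by simp
  have "fact (Suc r) = (real r + 1) * fact r" by simp
  also have "\<dots> \<le> (real r + 1) * ((real r + 1)/2)^r" using Suc by (intro mult_left_mono) auto
  also have "\<dots> = 2 * (real r + 1)^(r+1) / 2^(r+1)" by (simp add: power_divide field_simps)
  also have "\<dots> \<le> (real r + 2)^(r+1) / 2^(r+1)" using k by (intro divide_right_mono) auto
  also have "\<dots> = ((real (Suc r) + 1)/2)^(Suc r)" by (simp add: power_divide add.commute)
  finally show ?case .
qed

lemma R1': fixes g r :: nat assumes "g \<ge> 1" "(2*real g)^r / fact r < 1" shows "4*g \<le> r"
proof (rule ccontr)
  assume "\<not> 4*g \<le> r"
  hence "(real r + 1)/2 \<le> 2 * real g" by simp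
  hence "((real r + 1)/2)^r \<le> (2*real g)^r" by (intro power_mono) auto
  hence "fact r \<le> (2*real g)^r" using R1[of r] by linarith
  thus False using assms(2) by (simp add: divide_less_eq)
qed

lemma R2: fixes g r :: nat assumes "(2*real g)^r / fact r < 1"
  shows "real g^(r+1-2*g) / fact (r+1-2*g) \<le> (2*real g)^r / fact r"
proof (cases "g = 0")
  case True then show ?thesis by simp
next
  case False
  hence g1: "g \<ge> 1" by simp
  have r4: "4*g \<le> r" using R1'[OF g1 assms] .
  define m where "m = r + 1 - 2*g"
  have rm: "r - (2*g - 1) = m" and mr: "m \<le> r" using r4 g1 by (auto simp: m_def)
  have dv: "fact m dvd (fact r :: nat)" using mr by (simp add: fact_dvd)
  have "fact r div fact m \<le> r^(2*g-1)" using fact_div_fact_le_pow[of "2*g-1" r] r4 rm by simp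
  hence fr: "(fact r::nat) \<le> r^(2*g-1) * fact m" using dv
    by (metis dvd_div_mult_self mult_le_mono1)
  have "r^(2*g) \<le> 2^r * g^(2*g)" using R3 r4 by simp
  moreover have "r^(2*g) = r * r^(2*g-1)" "g^(2*g) = g * g^(2*g-1)" using g1
    by (simp_all add: power_eq_if)
  ultimately have A: "r * r^(2*g-1) \<le> g * (2^r * g^(2*g-1))" by (simp add: mult.left_commute)
  have "g * r^(2*g-1) \<le> r * r^(2*g-1)" using r4 by (intro mult_right_mono) auto
  hence "g * r^(2*g-1) \<le> g * (2^r * g^(2*g-1))" using A by linarith
  hence "r^(2*g-1) \<le> 2^r * g^(2*g-1)" using g1 by simp
  hence "g^m * r^(2*g-1) * fact m \<le> g^m * (2^r * g^(2*g-1)) * fact m" by simp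
  also have "g^m * (2^r * g^(2*g-1)) = 2^r * g^r"
    using r4 g1 by (simp add: m_def power_add[symmetric])
  finally have "g^m * (r^(2*g-1) * fact m) \<le> (2*g)^r * fact m"
    by (simp add: power_mult_distrib mult.assoc)
  hence "g^m * fact r \<le> (2*g)^r * fact m" using fr
    by (meson le_trans mult_le_mono2)
  hence "real (g^m * fact r) \<le> real ((2*g)^r * fact m)" by (simp only: of_nat_le_iff)
  hence "real g^m * fact r \<le> (2*real g)^r * fact m" by simp
  thus ?thesis unfolding m_def[symmetric] by (simp add: divide_le_eq field_simps)
qed


lemma card_pair_snd:
  assumes "finite X" "finite Y" "\<forall>x\<in>X. real (card {y\<in>Y. R (x,y)}) \<le> M"
  shows "real (card {p\<in>X\<times>Y. R p}) \<le> real (card X) * M"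
proof -
  have "{p\<in>X\<times>Y. R p} = Sigma X (\<lambda>x. {y\<in>Y. R (x,y)})" by auto
  hence "card {p\<in>X\<times>Y. R p} = (\<Sum>x\<in>X. card {y\<in>Y. R (x,y)})"
    using assms(1,2) by (simp add: card_SigmaI)
  hence "real (card {p\<in>X\<times>Y. R p}) = (\<Sum>x\<in>X. real (card {y\<in>Y. R (x,y)}))" by simp
  also have "\<dots> \<le> (\<Sum>x\<in>X. M)" by (rule sum_mono) (use assms(3) in auto)
  finally show ?thesis by simp
qed

lemma card_pair_fst:
  assumes "finite X" "finite Y" "\<forall>y\<in>Y. real (card {x\<in>X. R (x,y)}) \<le> M"
  shows "real (card {p\<in>X\<times>Y. R p}) \<le> real (card Y) * M"
proof -
  have "{p\<in>X\<times>Y. R p} = prod.swap ` {q\<in>Y\<times>X. R (snd q, fst q)}" by force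
  hence "card {p\<in>X\<times>Y. R p} = card {q\<in>Y\<times>X. R (snd q, fst q)}"
    by (simp add: card_image)
  moreover have "real (card {q\<in>Y\<times>X. R (snd q, fst q)}) \<le> real (card Y) * M"
    by (rule card_pair_snd) (use assms in auto)
  ultimately show ?thesis by simp
qed

definition perms :: "nat \<Rightarrow> (nat \<Rightarrow> nat) set" where
  "perms n = {\<tau>. \<tau> permutes {1..n}}"

lemma perms_finite: "finite (perms n)"
  unfolding perms_def by (rule finite_permutations) simp

lemma perms_card: "card (perms n) = fact n"
  unfolding perms_def by (rule card_permutations) simp_all

abbreviation Omega :: "nat \<Rightarrow> ((nat \<Rightarrow> nat) \<times> (nat \<Rightarrow> nat) \<times> (nat \<Rightarrow> nat) \<times> (nat \<Rightarrow> nat)) set" where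
  "Omega n \<equiv> perms n \<times> perms n \<times> perms n \<times> perms n"

lemma lift4:
  assumes "\<forall>t1\<in>perms n. \<forall>t2\<in>perms n. \<forall>t3\<in>perms n. real (card {t4\<in>perms n. Q (t1,t2,t3,t4)}) \<le> M"
  shows "real (card {\<sigma>\<in>Omega n. Q \<sigma>}) \<le> fact n ^ 3 * M"
proof -
  let ?P = "perms n"
  have f: "finite ?P" by (rule perms_finite)
  have "\<forall>t1\<in>?P. real (card {y\<in>?P\<times>?P\<times>?P. Q (t1,y)}) \<le> real (card ?P) * (real (card ?P) * M)"
  proof
    fix t1 assume t1: "t1 \<in> ?P"
    show "real (card {y\<in>?P\<times>?P\<times>?P. Q (t1,y)}) \<le> real (card ?P) * (real (card ?P) * M)"
    proof (rule card_pair_snd[where R="\<lambda>y. Q (t1,y)"])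
      show "\<forall>t2\<in>?P. real (card {y\<in>?P\<times>?P. Q (t1,t2,y)}) \<le> real (card ?P) * M"
      proof
        fix t2 assume t2: "t2 \<in> ?P"
        show "real (card {y\<in>?P\<times>?P. Q (t1,t2,y)}) \<le> real (card ?P) * M"
          by (rule card_pair_snd[where R="\<lambda>y. Q (t1,t2,y)"]) (use assms t1 t2 f in auto)
      qed
    qed (use f in auto)
  qed
  hence "real (card {\<sigma>\<in>Omega n. Q \<sigma>}) \<le> real (card ?P) * (real (card ?P) * (real (card ?P) * M))"
    by (intro card_pair_snd) (use f in auto)
  thus ?thesis by (simp add: perms_card power3_eq_cube mult.assoc)
qed

lemma lift3:
  assumes "\<forall>t1\<in>perms n. \<forall>t2\<in>perms n. \<forall>t4\<in>perms n. real (card {t3\<in>perms n. Q (t1,t2,t3,t4)}) \<le> M"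
  shows "real (card {\<sigma>\<in>Omega n. Q \<sigma>}) \<le> fact n ^ 3 * M"
proof -
  let ?P = "perms n"
  have f: "finite ?P" by (rule perms_finite)
  have "\<forall>t1\<in>?P. real (card {y\<in>?P\<times>?P\<times>?P. Q (t1,y)}) \<le> real (card ?P) * (real (card ?P) * M)"
  proof
    fix t1 assume t1: "t1 \<in> ?P"
    show "real (card {y\<in>?P\<times>?P\<times>?P. Q (t1,y)}) \<le> real (card ?P) * (real (card ?P) * M)"
    proof (rule card_pair_snd[where R="\<lambda>y. Q (t1,y)"])
      show "\<forall>t2\<in>?P. real (card {y\<in>?P\<times>?P. Q (t1,t2,y)}) \<le> real (card ?P) * M"
      proof
        fix t2 assume t2: "t2 \<in> ?P"
        show "real (card {y\<in>?P\<times>?P. Q (t1,t2,y)}) \<le> real (card ?P) * M"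
          by (rule card_pair_fst[where R="\<lambda>y. Q (t1,t2,y)"]) (use assms t1 t2 f in auto)
      qed
    qed (use f in auto)
  qed
  hence "real (card {\<sigma>\<in>Omega n. Q \<sigma>}) \<le> real (card ?P) * (real (card ?P) * (real (card ?P) * M))"
    by (intro card_pair_snd) (use f in auto)
  thus ?thesis by (simp add: perms_card power3_eq_cube mult.assoc)
qed

lemma lift2:
  assumes "\<forall>t1\<in>perms n. \<forall>t3\<in>perms n. \<forall>t4\<in>perms n. real (card {t2\<in>perms n. Q (t1,t2,t3,t4)}) \<le> M"
  shows "real (card {\<sigma>\<in>Omega n. Q \<sigma>}) \<le> fact n ^ 3 * M"
proof -
  let ?P = "perms n"
  have f: "finite ?P" by (rule perms_finite)
  have "\<forall>t1\<in>?P. real (card {y\<in>?P\<times>?P\<times>?P. Q (t1,y)}) \<le> real (card (?P \<times> ?P)) * M"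
  proof
    fix t1 assume t1: "t1 \<in> ?P"
    show "real (card {y\<in>?P\<times>?P\<times>?P. Q (t1,y)}) \<le> real (card (?P\<times>?P)) * M"
      by (rule card_pair_fst[where R="\<lambda>y. Q (t1,y)"]) (use assms t1 f in auto)
  qed
  hence "real (card {\<sigma>\<in>Omega n. Q \<sigma>}) \<le> real (card ?P) * (real (card (?P\<times>?P)) * M)"
    by (intro card_pair_snd) (use f in auto)
  thus ?thesis by (simp add: perms_card power3_eq_cube mult.assoc card_cartesian_product)
qed


lemma fiber_bound:
  assumes "inj_on h D" "h ` D \<subseteq> {1..n}" "\<forall>x\<in>D. finite (S x) \<and> card (S x) \<le> g"
  shows "real (card {\<tau>\<in>perms n. m \<le> card {x\<in>D. \<tau> (h x) \<in> S x}}) \<le> fact n * real g ^ m / fact m"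
proof -
  have "real (card {\<tau>. \<tau> permutes {1..n} \<and> (\<forall>q\<in>{}. \<tau> q \<in> (\<lambda>_. {}) q) \<and> m \<le> card {x\<in>D. \<tau> (h x) \<in> S x}})
        \<le> fact (card {1..n} - card ({}::nat set)) * real g ^ m / fact m"
    by (rule perm_count_bound) (use assms in auto)
  moreover have "{\<tau>. \<tau> permutes {1..n} \<and> (\<forall>q\<in>{}. \<tau> q \<in> (\<lambda>_. {}) q) \<and> m \<le> card {x\<in>D. \<tau> (h x) \<in> S x}}
     = {\<tau>\<in>perms n. m \<le> card {x\<in>D. \<tau> (h x) \<in> S x}}" by (auto simp: perms_def)
  ultimately show ?thesis by simp
qed

lemma fiber_bound_pt:
  assumes "inj_on h D" "h ` D \<subseteq> {1..n} - {e}" "\<forall>x\<in>D. finite (S x) \<and> card (S x) \<le> g"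
    "e \<in> {1..n}"
  shows "real (card {\<tau>\<in>perms n. \<tau> e = c \<and> m \<le> card {x\<in>D. \<tau> (h x) \<in> S x}}) \<le> fact (n - 1) * real g ^ m / fact m"
proof -
  have "real (card {\<tau>. \<tau> permutes {1..n} \<and> (\<forall>q\<in>{e}. \<tau> q \<in> (\<lambda>_. {c}) q) \<and> m \<le> card {x\<in>D. \<tau> (h x) \<in> S x}})
        \<le> fact (card {1..n} - card {e}) * real g ^ m / fact m"
    by (rule perm_count_bound) (use assms in auto)
  moreover have "{\<tau>. \<tau> permutes {1..n} \<and> (\<forall>q\<in>{e}. \<tau> q \<in> (\<lambda>_. {c}) q) \<and> m \<le> card {x\<in>D. \<tau> (h x) \<in> S x}}
     = {\<tau>\<in>perms n. \<tau> e = c \<and> m \<le> card {x\<in>D. \<tau> (h x) \<in> S x}}" by (auto simp: perms_def)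
  ultimately show ?thesis by simp
qed

lemma ev4:
  assumes "\<forall>t1\<in>perms n. \<forall>t2\<in>perms n. \<forall>t3\<in>perms n. inj_on (h t1 t2 t3) (D t1 t2 t3) \<and>
     h t1 t2 t3 ` D t1 t2 t3 \<subseteq> {1..n} \<and> (\<forall>x\<in>D t1 t2 t3. finite (S t1 t2 t3 x) \<and> card (S t1 t2 t3 x) \<le> g)"
  shows "real (card {\<sigma>\<in>Omega n. case \<sigma> of (t1,t2,t3,t4) \<Rightarrow>
            m \<le> card {x\<in>D t1 t2 t3. t4 (h t1 t2 t3 x) \<in> S t1 t2 t3 x}}) \<le> fact n ^ 4 * real g ^ m / fact m"
proof -
  have "real (card {\<sigma>\<in>Omega n. case \<sigma> of (t1,t2,t3,t4) \<Rightarrow>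
            m \<le> card {x\<in>D t1 t2 t3. t4 (h t1 t2 t3 x) \<in> S t1 t2 t3 x}}) \<le> fact n ^ 3 * (fact n * real g ^ m / fact m)"
    apply (rule lift4) apply (simp only: prod.case) apply (intro ballI fiber_bound) using assms by auto
  thus ?thesis by (simp add: power_Suc2[symmetric] numeral_eq_Suc mult.assoc)
qed

lemma ev3:
  assumes "\<forall>t1\<in>perms n. \<forall>t2\<in>perms n. \<forall>t4\<in>perms n. inj_on (h t1 t2 t4) (D t1 t2 t4) \<and>
     h t1 t2 t4 ` D t1 t2 t4 \<subseteq> {1..n} \<and> (\<forall>x\<in>D t1 t2 t4. finite (S t1 t2 t4 x) \<and> card (S t1 t2 t4 x) \<le> g)"
  shows "real (card {\<sigma>\<in>Omega n. case \<sigma> of (t1,t2,t3,t4) \<Rightarrow>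
            m \<le> card {x\<in>D t1 t2 t4. t3 (h t1 t2 t4 x) \<in> S t1 t2 t4 x}}) \<le> fact n ^ 4 * real g ^ m / fact m"
proof -
  have "real (card {\<sigma>\<in>Omega n. case \<sigma> of (t1,t2,t3,t4) \<Rightarrow>
            m \<le> card {x\<in>D t1 t2 t4. t3 (h t1 t2 t4 x) \<in> S t1 t2 t4 x}}) \<le> fact n ^ 3 * (fact n * real g ^ m / fact m)"
    apply (rule lift3) apply (simp only: prod.case) apply (intro ballI fiber_bound) using assms by auto
  thus ?thesis by (simp add: power_Suc2[symmetric] numeral_eq_Suc mult.assoc)
qed

lemma ev2:
  assumes "\<forall>t1\<in>perms n. \<forall>t3\<in>perms n. \<forall>t4\<in>perms n. inj_on (h t1 t3 t4) (D t1 t3 t4) \<and>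
     h t1 t3 t4 ` D t1 t3 t4 \<subseteq> {1..n} \<and> (\<forall>x\<in>D t1 t3 t4. finite (S t1 t3 t4 x) \<and> card (S t1 t3 t4 x) \<le> g)"
  shows "real (card {\<sigma>\<in>Omega n. case \<sigma> of (t1,t2,t3,t4) \<Rightarrow>
            m \<le> card {x\<in>D t1 t3 t4. t2 (h t1 t3 t4 x) \<in> S t1 t3 t4 x}}) \<le> fact n ^ 4 * real g ^ m / fact m"
proof -
  have "real (card {\<sigma>\<in>Omega n. case \<sigma> of (t1,t2,t3,t4) \<Rightarrow>
            m \<le> card {x\<in>D t1 t3 t4. t2 (h t1 t3 t4 x) \<in> S t1 t3 t4 x}}) \<le> fact n ^ 3 * (fact n * real g ^ m / fact m)"
    apply (rule lift2) apply (simp only: prod.case) apply (intro ballI fiber_bound) using assms by auto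
  thus ?thesis by (simp add: power_Suc2[symmetric] numeral_eq_Suc mult.assoc)
qed

lemma ev3p:
  assumes "e \<in> {1..n}"
    "\<forall>t1\<in>perms n. \<forall>t2\<in>perms n. \<forall>t4\<in>perms n. inj_on (h t1 t2 t4) (D t1 t2 t4) \<and>
     h t1 t2 t4 ` D t1 t2 t4 \<subseteq> {1..n} - {e} \<and> (\<forall>x\<in>D t1 t2 t4. finite (S t1 t2 t4 x) \<and> card (S t1 t2 t4 x) \<le> g)"
  shows "real (card {\<sigma>\<in>Omega n. case \<sigma> of (t1,t2,t3,t4) \<Rightarrow>
            t3 e = c \<and> m \<le> card {x\<in>D t1 t2 t4. t3 (h t1 t2 t4 x) \<in> S t1 t2 t4 x}}) \<le> fact n ^ 3 * fact (n - 1) * real g ^ m / fact m"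
proof -
  have "real (card {\<sigma>\<in>Omega n. case \<sigma> of (t1,t2,t3,t4) \<Rightarrow>
            t3 e = c \<and> m \<le> card {x\<in>D t1 t2 t4. t3 (h t1 t2 t4 x) \<in> S t1 t2 t4 x}}) \<le> fact n ^ 3 * (fact (n-1) * real g ^ m / fact m)"
    apply (rule lift3) apply (simp only: prod.case) apply (intro ballI fiber_bound_pt) using assms by auto
  thus ?thesis by (simp add: mult.assoc)
qed


lemma xor_left_self: "xor x (xor x y) = (y::nat)"
  by (simp add: xor.assoc[symmetric])

lemmas bxs = bx_def xor.assoc xor.commute xor.left_commute xor_left_self

lemma bx_solve: "y \<ge> 1 \<Longrightarrow> bx (bx a y) e = w \<Longrightarrow> y = bx (bx a e) w"
  by (auto simp: bxs)
lemma bx_solve3: "z \<ge> 1 \<Longrightarrow> bx c z = w \<Longrightarrow> z = bx c w"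
  by (auto simp: bxs)
lemma bx_solve1: "a \<ge> 1 \<Longrightarrow> bx a e = u \<Longrightarrow> a = bx u e"
  by (auto simp: bxs)
lemma bx_injL: "x \<ge> 1 \<Longrightarrow> y \<ge> 1 \<Longrightarrow> bx x e = bx y e \<Longrightarrow> x = y"
  by (metis bx_comm bx_inj)
lemma bx_ne: "x \<ge> 1 \<Longrightarrow> d \<ge> 1 \<Longrightarrow> d \<noteq> 1 \<Longrightarrow> bx x d \<noteq> x"
  by (metis bx_cancel bx_one bx_self)

lemma pattern:
  fixes d p1 p2 p3 q1 q2 q3 :: nat
  assumes d: "d \<ge> 1" "d \<noteq> 1"
    and p: "p1 \<in> {1,d}" "p2 \<in> {1,d}" "p3 \<in> {1,d}" "q1 \<in> {1,d}" "q2 \<in> {1,d}" "q3 \<in> {1,d}"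
    and nr: "\<not> (p1 = q1 \<and> p3 = q3)" and nc: "\<not> (p2 = q2 \<and> p3 = q3)" and nf: "\<not> (p1 = q1 \<and> p2 = q2)"
    and nv: "bx (bx p1 p2) p3 \<noteq> bx (bx q1 q2) q3"
  shows "bx p1 p3 = bx q1 q3 \<and> bx p2 p3 = bx q2 q3"
proof -
  define f where "f b = (if b then d else 1)" for b
  have fx: "bx (f a) (f b) = f (a \<noteq> b)" for a b using d by (simp add: f_def bx_def)
  have fi: "f a = f b \<longleftrightarrow> a = b" for a b using d by (simp add: f_def)
  have ex: "\<exists>b. x = f b" if "x \<in> {1,d}" for x using that by (auto simp: f_def)
  obtain A1 A2 A3 B1 B2 B3 where e: "p1 = f A1" "p2 = f A2" "p3 = f A3" "q1 = f B1" "q2 = f B2" "q3 = f B3"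
    using ex[OF p(1)] ex[OF p(2)] ex[OF p(3)] ex[OF p(4)] ex[OF p(5)] ex[OF p(6)] by metis
  show ?thesis using nr nc nf nv unfolding e fx fi by blast
qed

lemma N_bx: "n = 2^t \<Longrightarrow> x \<in> {1..n} \<Longrightarrow> y \<in> {1..n} \<Longrightarrow> bx x y \<in> {1..n}"
  using bx_range[of x t y] by blast

lemma perm_in: assumes "\<tau> \<in> perms n" "x \<in> {1..n}" shows "\<tau> x \<in> {1..n}"
proof -
  have h: "\<tau> permutes {1..n}" using assms(1) by (simp add: perms_def)
  show ?thesis by (rule permutes_in_image[OF h, THEN iffD2, OF assms(2)])
qed
lemma perm_inv_in: assumes "\<tau> \<in> perms n" "x \<in> {1..n}" shows "inv \<tau> x \<in> {1..n}"
proof -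
  have h: "\<tau> permutes {1..n}" using assms(1) by (simp add: perms_def)
  show ?thesis by (rule permutes_in_image[OF permutes_inv[OF h], THEN iffD2, OF assms(2)])
qed
lemma perm_inv_f: "\<tau> \<in> perms n \<Longrightarrow> inv \<tau> (\<tau> x) = x"
  unfolding perms_def by (simp add: permutes_inverses(2))
lemma perm_f_inv: "\<tau> \<in> perms n \<Longrightarrow> \<tau> (inv \<tau> x) = x"
  unfolding perms_def by (simp add: permutes_inverses(1))
lemma perm_inj: assumes "\<tau> \<in> perms n" shows "\<tau> x = \<tau> y \<longleftrightarrow> x = y"
proof -
  have h: "\<tau> permutes {1..n}" using assms(1) by (simp add: perms_def)
  show ?thesis using permutes_inj[OF h] by (simp add: inj_eq)
qed

lemma L_def': "apply_sigma t1 t2 t3 t4 boolean_cube (i,j,k) = t4 (bx (bx (inv t1 i) (inv t2 j)) (inv t3 k))"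
  by (simp add: apply_sigma_def boolean_cube_bx)

lemma L_val: "t1 \<in> perms n \<Longrightarrow> t2 \<in> perms n \<Longrightarrow> t3 \<in> perms n \<Longrightarrow>
   apply_sigma t1 t2 t3 t4 boolean_cube (t1 a, t2 b, t3 e) = t4 (bx (bx a b) e)"
  by (simp add: L_def' perm_inv_f)


lemma the_other1: "u \<noteq> v \<Longrightarrow> (THE y. y \<in> {u,v} \<and> y \<noteq> u) = v"
  by (rule the_equality) auto
lemma the_other2: "u \<noteq> v \<Longrightarrow> (THE y. y \<in> {u,v} \<and> y \<noteq> v) = u"
  by (rule the_equality) auto

lemma the_other1': "u \<noteq> v \<Longrightarrow> (THE y. (y = u \<or> y = v) \<and> y \<noteq> u) = v"
  by (rule the_equality) auto
lemma the_other2': "u \<noteq> v \<Longrightarrow> (THE y. (y = u \<or> y = v) \<and> y \<noteq> v) = u"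
  by (rule the_equality) auto

lemma mem2: "x \<in> {y1, y2} \<Longrightarrow> y2 = bx y1 d \<Longrightarrow> y1 \<ge> 1 \<Longrightarrow> \<exists>p\<in>{1,d}. x = bx y1 p"
  using bx_one by auto

lemma cube_key:
  assumes n: "n = 2^t" and ts: "t1 \<in> perms n" "t2 \<in> perms n" "t3 \<in> perms n" "t4 \<in> perms n"
    and cube: "is_3cube n (apply_sigma t1 t2 t3 t4 boolean_cube) C"
    and c: "(i,j,k) \<in> C" "(i',j',k') \<in> C"
    and nr: "\<not> (i = i' \<and> k = k')" and nc: "\<not> (j = j' \<and> k = k')" and nf: "\<not> (i = i' \<and> j = j')"
    and nv: "apply_sigma t1 t2 t3 t4 boolean_cube (i,j,k) \<noteq> apply_sigma t1 t2 t3 t4 boolean_cube (i',j',k')"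
  shows "bx (inv t1 i) (inv t3 k) = bx (inv t1 i') (inv t3 k') \<and> bx (inv t2 j) (inv t3 k) = bx (inv t2 j') (inv t3 k')"
proof -
  let ?L = "apply_sigma t1 t2 t3 t4 boolean_cube"
  obtain i1 i2 j1 j2 k1 k2 x1 x2 where
    cb: "i1 \<in> {1..n}" "i2 \<in> {1..n}" "j1 \<in> {1..n}" "j2 \<in> {1..n}" "k1 \<in> {1..n}" "k2 \<in> {1..n}"
      "i1 \<noteq> i2" "j1 \<noteq> j2" "k1 \<noteq> k2" "C = {i1,i2} \<times> {j1,j2} \<times> {k1,k2}"
      "?L (i1,j1,k1) = x1" "?L (i2,j2,k1) = x1" "?L (i1,j2,k2) = x1"
    using cube unfolding is_3cube_def by (elim bexE exE conjE) (rule that; assumption)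
  define a1 where "a1 = inv t1 i1"
  define a2 where "a2 = inv t1 i2"
  define b1 where "b1 = inv t2 j1"
  define b2 where "b2 = inv t2 j2"
  define e1 where "e1 = inv t3 k1"
  define e2 where "e2 = inv t3 k2"
  have ge: "a1 \<ge> 1" "a2 \<ge> 1" "b1 \<ge> 1" "b2 \<ge> 1" "e1 \<ge> 1" "e2 \<ge> 1"
    using perm_inv_in[OF ts(1) cb(1)] perm_inv_in[OF ts(1) cb(2)] perm_inv_in[OF ts(2) cb(3)]
      perm_inv_in[OF ts(2) cb(4)] perm_inv_in[OF ts(3) cb(5)] perm_inv_in[OF ts(3) cb(6)]
    by (auto simp: a1_def a2_def b1_def b2_def e1_def e2_def)
  have Lv: "?L (i,j,k) = t4 (bx (bx (inv t1 i) (inv t2 j)) (inv t3 k))" for i j k by (rule L_def')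
  have "t4 (bx (bx a1 b1) e1) = t4 (bx (bx a2 b2) e1)"
    using cb(11,12) by (simp add: Lv a1_def a2_def b1_def b2_def e1_def)
  hence E1: "bx (bx a1 b1) e1 = bx (bx a2 b2) e1" using perm_inj[OF ts(4)] by simp
  have "t4 (bx (bx a1 b1) e1) = t4 (bx (bx a1 b2) e2)"
    using cb(11,13) by (simp add: Lv a1_def a2_def b1_def b2_def e1_def e2_def)
  hence E2: "bx (bx a1 b1) e1 = bx (bx a1 b2) e2" using perm_inj[OF ts(4)] by simp
  define d where "d = bx a1 a2"
  have d1: "d \<ge> 1" unfolding d_def by (rule bx_ge1)
  have a12: "a1 \<noteq> a2"
  proof
    assume "a1 = a2"
    hence "t1 a1 = t1 a2" by simp
    thus False using cb(7) perm_f_inv[OF ts(1)] by (simp add: a1_def a2_def)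
  qed
  have dn1: "d \<noteq> 1" using a12 ge bx_eq1 by (simp add: d_def)
  have A2: "a2 = bx a1 d" using ge by (simp add: d_def bx_cancel)
  have "bx a1 b1 = bx a2 b2" by (rule bx_injL[OF bx_ge1 bx_ge1 E1])
  hence "b2 = bx a2 (bx a1 b1)" using bx_solve3[OF ge(4)] by metis
  hence B2: "b2 = bx b1 d" by (simp add: d_def bxs)
  have "e2 = bx (bx a1 b2) (bx (bx a1 b1) e1)" using bx_solve3[OF ge(6) E2[symmetric]] .
  hence E2': "e2 = bx e1 d" using B2 by (simp add: d_def bxs)
  have inv_i: "inv t1 x \<in> {a1, a2}" if "x \<in> {i1, i2}" for x using that by (auto simp: a1_def a2_def)
  have inv_j: "inv t2 x \<in> {b1, b2}" if "x \<in> {j1, j2}" for x using that by (auto simp: b1_def b2_def)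
  have inv_k: "inv t3 x \<in> {e1, e2}" if "x \<in> {k1, k2}" for x using that by (auto simp: e1_def e2_def)
  have ci: "i \<in> {i1,i2}" "j \<in> {j1,j2}" "k \<in> {k1,k2}" "i' \<in> {i1,i2}" "j' \<in> {j1,j2}" "k' \<in> {k1,k2}"
    using c cb(10) by auto
  obtain p1 where p1: "p1 \<in> {1,d}" "inv t1 i = bx a1 p1" using mem2[OF inv_i[OF ci(1)] A2 ge(1)] by blast
  obtain p2 where p2: "p2 \<in> {1,d}" "inv t2 j = bx b1 p2" using mem2[OF inv_j[OF ci(2)] B2 ge(3)] by blast
  obtain p3 where p3: "p3 \<in> {1,d}" "inv t3 k = bx e1 p3" using mem2[OF inv_k[OF ci(3)] E2' ge(5)] by blast
  obtain q1 where q1: "q1 \<in> {1,d}" "inv t1 i' = bx a1 q1" using mem2[OF inv_i[OF ci(4)] A2 ge(1)] by blast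
  obtain q2 where q2: "q2 \<in> {1,d}" "inv t2 j' = bx b1 q2" using mem2[OF inv_j[OF ci(5)] B2 ge(3)] by blast
  obtain q3 where q3: "q3 \<in> {1,d}" "inv t3 k' = bx e1 q3" using mem2[OF inv_k[OF ci(6)] E2' ge(5)] by blast
  note p = p1(1) p2(1) p3(1) p1(2) p2(2) p3(2)
  note q = q1(1) q2(1) q3(1) q1(2) q2(2) q3(2)
  have pge: "p1 \<ge> 1" "p2 \<ge> 1" "p3 \<ge> 1" "q1 \<ge> 1" "q2 \<ge> 1" "q3 \<ge> 1" using p q d1 by auto
  have eqv: "x = y \<longleftrightarrow> inv \<tau> x = inv \<tau> y" if "\<tau> \<in> perms n" for x y \<tau>
    using perm_f_inv[OF that] by (metis (no_types))
  have e1': "i = i' \<longleftrightarrow> p1 = q1" using eqv[OF ts(1), of i i'] p(4) q(4) bx_inj[OF pge(1) pge(4)] by auto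
  have e2': "j = j' \<longleftrightarrow> p2 = q2" using eqv[OF ts(2), of j j'] p(5) q(5) bx_inj[OF pge(2) pge(5)] by auto
  have e3': "k = k' \<longleftrightarrow> p3 = q3" using eqv[OF ts(3), of k k'] p(6) q(6) bx_inj[OF pge(3) pge(6)] by auto
  have val: "bx (bx (bx a1 x1) (bx b1 x2)) (bx e1 x3) = bx (bx (bx a1 b1) e1) (bx (bx x1 x2) x3)" for x1 x2 x3
    by (simp add: bxs)
  have "bx (bx p1 p2) p3 \<noteq> bx (bx q1 q2) q3"
  proof
    assume "bx (bx p1 p2) p3 = bx (bx q1 q2) q3"
    hence "?L (i,j,k) = ?L (i',j',k')" unfolding Lv p(4-6) q(4-6) val by simp
    thus False using nv by simp
  qed
  hence pat: "bx p1 p3 = bx q1 q3 \<and> bx p2 p3 = bx q2 q3"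
    using pattern[OF d1 dn1 p(1-3) q(1-3)] nr nc nf e1' e2' e3' by blast
  have key: "bx (bx y1 x1) (bx e1 x3) = bx (bx y1 e1) (bx x1 x3)" for y1 x1 x3 by (simp add: bxs)
  show ?thesis unfolding p(4-6) q(4-6) key using pat by simp
qed

lemma cube_vals:
  assumes ts: "t1 \<in> perms n" "t2 \<in> perms n" "t3 \<in> perms n"
    and ge: "a \<ge> 1" "b \<ge> 1" "e \<ge> 1" "d \<ge> 1"
    and L: "L = apply_sigma t1 t2 t3 t4 boolean_cube" and x: "x = bx (bx a b) e"
  shows "L (t1 a, t2 b, t3 e) = t4 x"
    "L (t1 (bx a d), t2 b, t3 e) = t4 (bx x d)"
    "L (t1 a, t2 (bx b d), t3 e) = t4 (bx x d)"
    "L (t1 a, t2 b, t3 (bx e d)) = t4 (bx x d)"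
    "L (t1 (bx a d), t2 (bx b d), t3 e) = t4 x"
    "L (t1 (bx a d), t2 b, t3 (bx e d)) = t4 x"
    "L (t1 a, t2 (bx b d), t3 (bx e d)) = t4 x"
    "L (t1 (bx a d), t2 (bx b d), t3 (bx e d)) = t4 (bx x d)"
  unfolding L x L_val[OF ts] using ge by (simp_all add: bxs)

lemma cube_d:
  assumes n: "n = 2^t" and ts: "t1 \<in> perms n" "t2 \<in> perms n" "t3 \<in> perms n" "t4 \<in> perms n"
    and abe: "a \<in> {1..n}" "b \<in> {1..n}" "e \<in> {1..n}" and d: "d \<in> {1..n}" "d \<noteq> 1"
    and C: "C = {t1 a, t1 (bx a d)} \<times> {t2 b, t2 (bx b d)} \<times> {t3 e, t3 (bx e d)}"
    and L: "L = apply_sigma t1 t2 t3 t4 boolean_cube" and x: "x = bx (bx a b) e"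
  shows "is_3cube n L C" "(t1 a, t2 b, t3 e) \<in> C" "C \<subseteq> cells n"
    "t4 (bx x d) \<notin> A (t1 a, t2 b, t3 e) \<Longrightarrow>
     t4 x \<notin> A (t1 (bx a d), t2 b, t3 e) \<Longrightarrow>
     t4 x \<notin> A (t1 a, t2 (bx b d), t3 e) \<Longrightarrow>
     t4 x \<notin> A (t1 a, t2 b, t3 (bx e d)) \<Longrightarrow>
     t4 (bx x d) \<notin> A (t1 (bx a d), t2 (bx b d), t3 e) \<Longrightarrow>
     t4 (bx x d) \<notin> A (t1 (bx a d), t2 b, t3 (bx e d)) \<Longrightarrow>
     t4 (bx x d) \<notin> A (t1 a, t2 (bx b d), t3 (bx e d)) \<Longrightarrow>
     t4 x \<notin> A (t1 (bx a d), t2 (bx b d), t3 (bx e d)) \<Longrightarrow> allowed_3cube n L A C"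
proof -
  have ge: "a \<ge> 1" "b \<ge> 1" "e \<ge> 1" "d \<ge> 1" using abe d by auto
  note V = cube_vals[OF ts(1-3) ge L x]
  have inN: "bx a d \<in> {1..n}" "bx b d \<in> {1..n}" "bx e d \<in> {1..n}"
    using N_bx[OF n] abe d by auto
  have P: "t1 a \<in> {1..n}" "t1 (bx a d) \<in> {1..n}" "t2 b \<in> {1..n}" "t2 (bx b d) \<in> {1..n}"
     "t3 e \<in> {1..n}" "t3 (bx e d) \<in> {1..n}"
    using perm_in[OF ts(1)] perm_in[OF ts(2)] perm_in[OF ts(3)] abe inN by auto
  have ne: "t1 a \<noteq> t1 (bx a d)" "t2 b \<noteq> t2 (bx b d)" "t3 e \<noteq> t3 (bx e d)"
    using perm_inj[OF ts(1)] perm_inj[OF ts(2)] perm_inj[OF ts(3)] bx_ne ge d(2) by metis+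
  show cube: "is_3cube n L C"
    unfolding is_3cube_def
    apply (rule bexI[of _ "t1 a"], rule bexI[of _ "t1 (bx a d)"], rule bexI[of _ "t2 b"],
           rule bexI[of _ "t2 (bx b d)"], rule bexI[of _ "t3 e"], rule bexI[of _ "t3 (bx e d)"])
    apply (rule exI[of _ "t4 x"], rule exI[of _ "t4 (bx x d)"])
    using V ne C P by auto
  show "(t1 a, t2 b, t3 e) \<in> C" using C by simp
  show "C \<subseteq> cells n" using C P by (auto simp: cells_def)
  assume h: "t4 (bx x d) \<notin> A (t1 a, t2 b, t3 e)"
     "t4 x \<notin> A (t1 (bx a d), t2 b, t3 e)"
     "t4 x \<notin> A (t1 a, t2 (bx b d), t3 e)"
     "t4 x \<notin> A (t1 a, t2 b, t3 (bx e d))"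
     "t4 (bx x d) \<notin> A (t1 (bx a d), t2 (bx b d), t3 e)"
     "t4 (bx x d) \<notin> A (t1 (bx a d), t2 b, t3 (bx e d))"
     "t4 (bx x d) \<notin> A (t1 a, t2 (bx b d), t3 (bx e d))"
     "t4 x \<notin> A (t1 (bx a d), t2 (bx b d), t3 (bx e d))"
  have xge: "x \<ge> 1" using x bx_ge1 by simp
  have uv: "t4 x \<noteq> t4 (bx x d)" using perm_inj[OF ts(4)] bx_ne[OF xge ge(4) d(2)] by metis
  have img: "L ` C = {t4 x, t4 (bx x d)}"
  proof
    show "L ` C \<subseteq> {t4 x, t4 (bx x d)}" using V C by auto
    show "{t4 x, t4 (bx x d)} \<subseteq> L ` C"
    proof -
      have "(t1 a, t2 b, t3 e) \<in> C" "(t1 (bx a d), t2 b, t3 e) \<in> C" using C by auto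
      thus ?thesis using V(1,2) by (metis empty_subsetI image_eqI insert_subset)
    qed
  qed
  have sw: "\<forall>c\<in>C. swap3 L C c \<notin> A c"
  proof
    fix c assume cC: "c \<in> C"
    have s: "swap3 L C c = (THE y. y \<in> {t4 x, t4 (bx x d)} \<and> y \<noteq> L c)"
      using cC img by (simp add: swap3_def)
    have "c \<in> {t1 a, t1 (bx a d)} \<times> {t2 b, t2 (bx b d)} \<times> {t3 e, t3 (bx e d)}" using cC C by simp
    thus "swap3 L C c \<notin> A c"
      unfolding s using h by (auto simp: V the_other1'[OF uv] the_other2'[OF uv])
  qed
  show "allowed_3cube n L A C" using cube sw by (simp add: allowed_3cube_def)
qed

lemma cube_d_inj:
  assumes n: "n = 2^t" and ts: "t1 \<in> perms n"
    and a: "a \<in> {1..n}" and d: "d \<in> {1..n} - {1}" "d' \<in> {1..n} - {1}"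
    and eq: "{t1 a, t1 (bx a d)} \<times> (Y::('y \<times> 'z) set) = {t1 a, t1 (bx a d')} \<times> Y'"
    and Y: "y \<in> Y"
  shows "d = d'"
proof -
  have "(t1 (bx a d), y) \<in> {t1 a, t1 (bx a d')} \<times> Y'" using eq Y by blast
  hence "t1 (bx a d) = t1 a \<or> t1 (bx a d) = t1 (bx a d')" by auto
  hence "bx a d = a \<or> bx a d = bx a d'" using perm_inj[OF ts] by simp
  moreover have "bx a d \<noteq> a" using bx_ne a d by auto
  ultimately have "bx a d = bx a d'" by simp
  thus ?thesis using bx_inj d by auto
qed


lemma bx_inj2: "y \<ge> 1 \<Longrightarrow> y' \<ge> 1 \<Longrightarrow> bx (bx a y) e = bx (bx a y') e \<Longrightarrow> y = y'"
  by (metis bx_inj bx_injL bx_ge1)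
lemma bx_inj1: "y \<ge> 1 \<Longrightarrow> y' \<ge> 1 \<Longrightarrow> bx (bx y b) e = bx (bx y' b) e \<Longrightarrow> y = y'"
  by (metis bx_injL bx_ge1)

lemma perm_inv_inj: "t \<in> perms n \<Longrightarrow> inv t x = inv t y \<Longrightarrow> x = y"
  by (metis perm_f_inv)

lemma mc_cell: "mcube n g A \<Longrightarrow> c \<in> cells n \<Longrightarrow> finite (A c) \<and> card (A c) \<le> g"
  unfolding mcube_def by (meson finite_atLeastAtMost finite_subset)
lemma mc_j: "mcube n g A \<Longrightarrow> i \<in> {1..n} \<Longrightarrow> k \<in> {1..n} \<Longrightarrow> card {j\<in>{1..n}. s \<in> A (i,j,k)} \<le> g"
  unfolding mcube_def by blast
lemma mc_i: "mcube n g A \<Longrightarrow> j \<in> {1..n} \<Longrightarrow> k \<in> {1..n} \<Longrightarrow> card {i\<in>{1..n}. s \<in> A (i,j,k)} \<le> g"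
  unfolding mcube_def by blast
lemma mc_k: "mcube n g A \<Longrightarrow> i \<in> {1..n} \<Longrightarrow> j \<in> {1..n} \<Longrightarrow> card {k\<in>{1..n}. s \<in> A (i,j,k)} \<le> g"
  unfolding mcube_def by blast


lemma inj_h2: assumes "t \<in> perms n" shows "inj_on (\<lambda>j. bx (bx a (inv t j)) e) {1..n}"
proof (rule inj_onI)
  fix x y assume xy: "x \<in> {1..n}" "y \<in> {1..n}" "bx (bx a (inv t x)) e = bx (bx a (inv t y)) e"
  have "inv t x \<ge> 1" "inv t y \<ge> 1" using perm_inv_in[OF assms] xy(1,2) by auto
  hence "inv t x = inv t y" using bx_inj2 xy(3) by blast
  thus "x = y" using perm_inv_inj[OF assms] by blast
qed
lemma inj_h1: assumes "t \<in> perms n" shows "inj_on (\<lambda>i. bx (bx (inv t i) b) e) {1..n}"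
proof (rule inj_onI)
  fix x y assume xy: "x \<in> {1..n}" "y \<in> {1..n}" "bx (bx (inv t x) b) e = bx (bx (inv t y) b) e"
  have "inv t x \<ge> 1" "inv t y \<ge> 1" using perm_inv_in[OF assms] xy(1,2) by auto
  hence "inv t x = inv t y" using bx_inj1 xy(3) by blast
  thus "x = y" using perm_inv_inj[OF assms] by blast
qed
lemma inj_h3: assumes "t \<in> perms n" shows "inj_on (\<lambda>k. bx c (inv t k)) {1..n}"
proof (rule inj_onI)
  fix x y assume xy: "x \<in> {1..n}" "y \<in> {1..n}" "bx c (inv t x) = bx c (inv t y)"
  have "inv t x \<ge> 1" "inv t y \<ge> 1" using perm_inv_in[OF assms] xy(1,2) by auto
  hence "inv t x = inv t y" using bx_inj xy(3) by blast
  thus "x = y" using perm_inv_inj[OF assms] by blast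
qed
lemma inj_bx: assumes "S \<subseteq> {1..n}" shows "inj_on (\<lambda>d. bx c d) S"
proof (rule inj_onI)
  fix x y assume xy: "x \<in> S" "y \<in> S" "bx c x = bx c y"
  have "x \<ge> 1" "y \<ge> 1" using assms xy(1,2) by auto
  thus "x = y" using bx_inj xy(3) by blast
qed

type_synonym sigma = "(nat \<Rightarrow> nat) \<times> (nat \<Rightarrow> nat) \<times> (nat \<Rightarrow> nat) \<times> (nat \<Rightarrow> nat)"

definition Erow :: "nat \<Rightarrow> (cell \<Rightarrow> nat set) \<Rightarrow> nat \<Rightarrow> nat \<Rightarrow> nat \<Rightarrow> sigma set" where
  "Erow n A m i kk = {\<sigma>\<in>Omega n. case \<sigma> of (t1,t2,t3,t4) \<Rightarrow>
     m \<le> card {j\<in>{1..n}. t4 (bx (bx (inv t1 i) (inv t2 j)) (inv t3 kk)) \<in> A (i,j,kk)}}"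

definition Ecol :: "nat \<Rightarrow> (cell \<Rightarrow> nat set) \<Rightarrow> nat \<Rightarrow> nat \<Rightarrow> nat \<Rightarrow> sigma set" where
  "Ecol n A m j kk = {\<sigma>\<in>Omega n. case \<sigma> of (t1,t2,t3,t4) \<Rightarrow>
     m \<le> card {i\<in>{1..n}. t4 (bx (bx (inv t1 i) (inv t2 j)) (inv t3 kk)) \<in> A (i,j,kk)}}"

definition Efile :: "nat \<Rightarrow> (cell \<Rightarrow> nat set) \<Rightarrow> nat \<Rightarrow> nat \<Rightarrow> nat \<Rightarrow> sigma set" where
  "Efile n A m i j = {\<sigma>\<in>Omega n. case \<sigma> of (t1,t2,t3,t4) \<Rightarrow>
     m \<le> card {kk\<in>{1..n}. t4 (bx (bx (inv t1 i) (inv t2 j)) (inv t3 kk)) \<in> A (i,j,kk)}}"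

definition Esym1 :: "nat \<Rightarrow> (cell \<Rightarrow> nat set) \<Rightarrow> nat \<Rightarrow> nat \<Rightarrow> nat \<Rightarrow> sigma set" where
  "Esym1 n A m i s = {\<sigma>\<in>Omega n. case \<sigma> of (t1,t2,t3,t4) \<Rightarrow>
     m \<le> card {j\<in>{1..n}. t3 (bx (bx (inv t1 i) (inv t2 j)) (inv t4 s)) \<in> {z\<in>{1..n}. s \<in> A (i,j,z)}}}"

definition Esym2 :: "nat \<Rightarrow> (cell \<Rightarrow> nat set) \<Rightarrow> nat \<Rightarrow> nat \<Rightarrow> nat \<Rightarrow> sigma set" where
  "Esym2 n A m j s = {\<sigma>\<in>Omega n. case \<sigma> of (t1,t2,t3,t4) \<Rightarrow>
     m \<le> card {x\<in>{1..n}. t3 (bx (bx (inv t1 x) (inv t2 j)) (inv t4 s)) \<in> {z\<in>{1..n}. s \<in> A (x,j,z)}}}"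

definition Esym3 :: "nat \<Rightarrow> (cell \<Rightarrow> nat set) \<Rightarrow> nat \<Rightarrow> nat \<Rightarrow> nat \<Rightarrow> sigma set" where
  "Esym3 n A m kk s = {\<sigma>\<in>Omega n. case \<sigma> of (t1,t2,t3,t4) \<Rightarrow>
     m \<le> card {x\<in>{1..n}. t2 (bx (bx (inv t1 x) (inv t3 kk)) (inv t4 s)) \<in> {y\<in>{1..n}. s \<in> A (x,y,kk)}}}"

definition Etr :: "nat \<Rightarrow> (cell \<Rightarrow> nat set) \<Rightarrow> nat \<Rightarrow> nat \<Rightarrow> nat \<Rightarrow> sigma set" where
  "Etr n A m u v = {\<sigma>\<in>Omega n. case \<sigma> of (t1,t2,t3,t4) \<Rightarrow>
     m \<le> card {e\<in>{1..n}. t4 (bx (bx u v) e) \<in> A (t1 (bx u e), t2 (bx v e), t3 e)}}"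

definition Ef12 :: "nat \<Rightarrow> (cell \<Rightarrow> nat set) \<Rightarrow> nat \<Rightarrow> nat \<Rightarrow> nat \<Rightarrow> nat \<Rightarrow> sigma set" where
  "Ef12 n A m c1 c2 c3 = {\<sigma>\<in>Omega n. case \<sigma> of (t1,t2,t3,t4) \<Rightarrow>
     m \<le> card {d\<in>{1..n} - {1}. t4 (bx (bx (bx (inv t1 c1) (inv t2 c2)) (inv t3 c3)) d) \<in>
        A (t1 (bx (inv t1 c1) d), t2 (bx (inv t2 c2) d), c3) \<union> A (t1 (bx (inv t1 c1) d), c2, t3 (bx (inv t3 c3) d))}}"

definition Ef3 :: "nat \<Rightarrow> (cell \<Rightarrow> nat set) \<Rightarrow> nat \<Rightarrow> nat \<Rightarrow> nat \<Rightarrow> nat \<Rightarrow> sigma set" where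
  "Ef3 n A m c1 c2 c3 = {\<sigma>\<in>Omega n. case \<sigma> of (t1,t2,t3,t4) \<Rightarrow>
     m \<le> card {d\<in>{1..n} - {1}. t4 (bx (bx (bx (inv t1 c1) (inv t2 c2)) (inv t3 c3)) d) \<in>
        A (c1, t2 (bx (inv t2 c2) d), t3 (bx (inv t3 c3) d))}}"

definition Eb :: "nat \<Rightarrow> (cell \<Rightarrow> nat set) \<Rightarrow> nat \<Rightarrow> nat \<Rightarrow> nat \<Rightarrow> nat \<Rightarrow> nat \<Rightarrow> sigma set" where
  "Eb n A m c1 c2 c3 e = {\<sigma>\<in>Omega n. case \<sigma> of (t1,t2,t3,t4) \<Rightarrow>
     t3 e = c3 \<and> m \<le> card {d\<in>{1..n} - {1}. t3 (bx e d) \<in>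
        {z\<in>{1..n}. t4 (bx (bx (inv t1 c1) (inv t2 c2)) e) \<in> A (t1 (bx (inv t1 c1) d), t2 (bx (inv t2 c2) d), z)}}}"

context
  fixes n t g :: nat and A :: "cell \<Rightarrow> nat set"
  assumes n: "n = 2^t" and mc: "mcube n g A"
begin

lemma Erow_bound: assumes "i \<in> {1..n}" "kk \<in> {1..n}"
  shows "real (card (Erow n A m i kk)) \<le> fact n ^ 4 * real g ^ m / fact m"
  unfolding Erow_def
proof (rule ev4)
  show "\<forall>t1\<in>perms n. \<forall>t2\<in>perms n. \<forall>t3\<in>perms n.
     inj_on (\<lambda>j. bx (bx (inv t1 i) (inv t2 j)) (inv t3 kk)) {1..n} \<and>
     (\<lambda>j. bx (bx (inv t1 i) (inv t2 j)) (inv t3 kk)) ` {1..n} \<subseteq> {1..n} \<and>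
     (\<forall>j\<in>{1..n}. finite (A (i,j,kk)) \<and> card (A (i,j,kk)) \<le> g)"
  proof (intro ballI conjI)
    fix t1 t2 t3 assume ts: "t1 \<in> perms n" "t2 \<in> perms n" "t3 \<in> perms n"
    show "inj_on (\<lambda>j. bx (bx (inv t1 i) (inv t2 j)) (inv t3 kk)) {1..n}"
      by (rule inj_h2[OF ts(2)])
    show "(\<lambda>j. bx (bx (inv t1 i) (inv t2 j)) (inv t3 kk)) ` {1..n} \<subseteq> {1..n}"
      using N_bx[OF n] perm_inv_in ts assms by auto
    fix j assume "j \<in> {1..n}"
    thus "finite (A (i,j,kk))" "card (A (i,j,kk)) \<le> g" using mc_cell[OF mc] assms by (auto simp: cells_def)
  qed
qed

lemma Ecol_bound: assumes "j \<in> {1..n}" "kk \<in> {1..n}"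
  shows "real (card (Ecol n A m j kk)) \<le> fact n ^ 4 * real g ^ m / fact m"
  unfolding Ecol_def
proof (rule ev4)
  show "\<forall>t1\<in>perms n. \<forall>t2\<in>perms n. \<forall>t3\<in>perms n.
     inj_on (\<lambda>i. bx (bx (inv t1 i) (inv t2 j)) (inv t3 kk)) {1..n} \<and>
     (\<lambda>i. bx (bx (inv t1 i) (inv t2 j)) (inv t3 kk)) ` {1..n} \<subseteq> {1..n} \<and>
     (\<forall>i\<in>{1..n}. finite (A (i,j,kk)) \<and> card (A (i,j,kk)) \<le> g)"
  proof (intro ballI conjI)
    fix t1 t2 t3 assume ts: "t1 \<in> perms n" "t2 \<in> perms n" "t3 \<in> perms n"
    show "inj_on (\<lambda>i. bx (bx (inv t1 i) (inv t2 j)) (inv t3 kk)) {1..n}"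
      by (rule inj_h1[OF ts(1)])
    show "(\<lambda>i. bx (bx (inv t1 i) (inv t2 j)) (inv t3 kk)) ` {1..n} \<subseteq> {1..n}"
      using N_bx[OF n] perm_inv_in ts assms by auto
    fix i assume "i \<in> {1..n}"
    thus "finite (A (i,j,kk))" "card (A (i,j,kk)) \<le> g" using mc_cell[OF mc] assms by (auto simp: cells_def)
  qed
qed

lemma Efile_bound: assumes "i \<in> {1..n}" "j \<in> {1..n}"
  shows "real (card (Efile n A m i j)) \<le> fact n ^ 4 * real g ^ m / fact m"
  unfolding Efile_def
proof (rule ev4)
  show "\<forall>t1\<in>perms n. \<forall>t2\<in>perms n. \<forall>t3\<in>perms n.
     inj_on (\<lambda>kk. bx (bx (inv t1 i) (inv t2 j)) (inv t3 kk)) {1..n} \<and>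
     (\<lambda>kk. bx (bx (inv t1 i) (inv t2 j)) (inv t3 kk)) ` {1..n} \<subseteq> {1..n} \<and>
     (\<forall>kk\<in>{1..n}. finite (A (i,j,kk)) \<and> card (A (i,j,kk)) \<le> g)"
  proof (intro ballI conjI)
    fix t1 t2 t3 assume ts: "t1 \<in> perms n" "t2 \<in> perms n" "t3 \<in> perms n"
    show "inj_on (\<lambda>kk. bx (bx (inv t1 i) (inv t2 j)) (inv t3 kk)) {1..n}"
      by (rule inj_h3[OF ts(3)])
    show "(\<lambda>kk. bx (bx (inv t1 i) (inv t2 j)) (inv t3 kk)) ` {1..n} \<subseteq> {1..n}"
      using N_bx[OF n] perm_inv_in ts assms by auto
    fix kk assume "kk \<in> {1..n}"
    thus "finite (A (i,j,kk))" "card (A (i,j,kk)) \<le> g" using mc_cell[OF mc] assms by (auto simp: cells_def)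
  qed
qed

lemma Esym1_bound: assumes "i \<in> {1..n}" "s \<in> {1..n}"
  shows "real (card (Esym1 n A m i s)) \<le> fact n ^ 4 * real g ^ m / fact m"
  unfolding Esym1_def
proof (rule ev3)
  show "\<forall>t1\<in>perms n. \<forall>t2\<in>perms n. \<forall>t4\<in>perms n.
     inj_on (\<lambda>j. bx (bx (inv t1 i) (inv t2 j)) (inv t4 s)) {1..n} \<and>
     (\<lambda>j. bx (bx (inv t1 i) (inv t2 j)) (inv t4 s)) ` {1..n} \<subseteq> {1..n} \<and>
     (\<forall>j\<in>{1..n}. finite {z\<in>{1..n}. s \<in> A (i,j,z)} \<and> card {z\<in>{1..n}. s \<in> A (i,j,z)} \<le> g)"
  proof (intro ballI conjI)
    fix t1 t2 t4 assume ts: "t1 \<in> perms n" "t2 \<in> perms n" "t4 \<in> perms n"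
    show "inj_on (\<lambda>j. bx (bx (inv t1 i) (inv t2 j)) (inv t4 s)) {1..n}"
      by (rule inj_h2[OF ts(2)])
    show "(\<lambda>j. bx (bx (inv t1 i) (inv t2 j)) (inv t4 s)) ` {1..n} \<subseteq> {1..n}"
      using N_bx[OF n] perm_inv_in ts assms by auto
    fix j assume "j \<in> {1..n}"
    thus "finite {z\<in>{1..n}. s \<in> A (i,j,z)}" "card {z\<in>{1..n}. s \<in> A (i,j,z)} \<le> g"
      using mc_k[OF mc] assms by auto
  qed
qed

lemma Esym2_bound: assumes "j \<in> {1..n}" "s \<in> {1..n}"
  shows "real (card (Esym2 n A m j s)) \<le> fact n ^ 4 * real g ^ m / fact m"
  unfolding Esym2_def
proof (rule ev3)
  show "\<forall>t1\<in>perms n. \<forall>t2\<in>perms n. \<forall>t4\<in>perms n.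
     inj_on (\<lambda>x. bx (bx (inv t1 x) (inv t2 j)) (inv t4 s)) {1..n} \<and>
     (\<lambda>x. bx (bx (inv t1 x) (inv t2 j)) (inv t4 s)) ` {1..n} \<subseteq> {1..n} \<and>
     (\<forall>x\<in>{1..n}. finite {z\<in>{1..n}. s \<in> A (x,j,z)} \<and> card {z\<in>{1..n}. s \<in> A (x,j,z)} \<le> g)"
  proof (intro ballI conjI)
    fix t1 t2 t4 assume ts: "t1 \<in> perms n" "t2 \<in> perms n" "t4 \<in> perms n"
    show "inj_on (\<lambda>x. bx (bx (inv t1 x) (inv t2 j)) (inv t4 s)) {1..n}"
      by (rule inj_h1[OF ts(1)])
    show "(\<lambda>x. bx (bx (inv t1 x) (inv t2 j)) (inv t4 s)) ` {1..n} \<subseteq> {1..n}"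
      using N_bx[OF n] perm_inv_in ts assms by auto
    fix x assume "x \<in> {1..n}"
    thus "finite {z\<in>{1..n}. s \<in> A (x,j,z)}" "card {z\<in>{1..n}. s \<in> A (x,j,z)} \<le> g"
      using mc_k[OF mc] assms by auto
  qed
qed

lemma Esym3_bound: assumes "kk \<in> {1..n}" "s \<in> {1..n}"
  shows "real (card (Esym3 n A m kk s)) \<le> fact n ^ 4 * real g ^ m / fact m"
  unfolding Esym3_def
proof (rule ev2)
  show "\<forall>t1\<in>perms n. \<forall>t3\<in>perms n. \<forall>t4\<in>perms n.
     inj_on (\<lambda>x. bx (bx (inv t1 x) (inv t3 kk)) (inv t4 s)) {1..n} \<and>
     (\<lambda>x. bx (bx (inv t1 x) (inv t3 kk)) (inv t4 s)) ` {1..n} \<subseteq> {1..n} \<and>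
     (\<forall>x\<in>{1..n}. finite {y\<in>{1..n}. s \<in> A (x,y,kk)} \<and> card {y\<in>{1..n}. s \<in> A (x,y,kk)} \<le> g)"
  proof (intro ballI conjI)
    fix t1 t3 t4 assume ts: "t1 \<in> perms n" "t3 \<in> perms n" "t4 \<in> perms n"
    show "inj_on (\<lambda>x. bx (bx (inv t1 x) (inv t3 kk)) (inv t4 s)) {1..n}"
      by (rule inj_h1[OF ts(1)])
    show "(\<lambda>x. bx (bx (inv t1 x) (inv t3 kk)) (inv t4 s)) ` {1..n} \<subseteq> {1..n}"
      using N_bx[OF n] perm_inv_in ts assms by auto
    fix x assume "x \<in> {1..n}"
    thus "finite {y\<in>{1..n}. s \<in> A (x,y,kk)}" "card {y\<in>{1..n}. s \<in> A (x,y,kk)} \<le> g"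
      using mc_j[OF mc] assms by auto
  qed
qed

lemma Etr_bound: assumes "u \<in> {1..n}" "v \<in> {1..n}"
  shows "real (card (Etr n A m u v)) \<le> fact n ^ 4 * real g ^ m / fact m"
  unfolding Etr_def
proof (rule ev4)
  show "\<forall>t1\<in>perms n. \<forall>t2\<in>perms n. \<forall>t3\<in>perms n.
     inj_on (\<lambda>e. bx (bx u v) e) {1..n} \<and>
     (\<lambda>e. bx (bx u v) e) ` {1..n} \<subseteq> {1..n} \<and>
     (\<forall>e\<in>{1..n}. finite (A (t1 (bx u e), t2 (bx v e), t3 e)) \<and> card (A (t1 (bx u e), t2 (bx v e), t3 e)) \<le> g)"
  proof (intro ballI conjI)
    fix t1 t2 t3 assume ts: "t1 \<in> perms n" "t2 \<in> perms n" "t3 \<in> perms n"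
    show "inj_on (\<lambda>e. bx (bx u v) e) {1..n}"
      by (rule inj_bx[of _ n]) auto
    show "(\<lambda>e. bx (bx u v) e) ` {1..n} \<subseteq> {1..n}"
      using N_bx[OF n] assms by auto
    fix e assume e: "e \<in> {1..n}"
    have "(t1 (bx u e), t2 (bx v e), t3 e) \<in> cells n"
      using perm_in ts N_bx[OF n] assms e by (auto simp: cells_def)
    thus "finite (A (t1 (bx u e), t2 (bx v e), t3 e))" "card (A (t1 (bx u e), t2 (bx v e), t3 e)) \<le> g"
      using mc_cell[OF mc] by auto
  qed
qed

lemma Ef12_bound: assumes "(c1,c2,c3) \<in> cells n"
  shows "real (card (Ef12 n A m c1 c2 c3)) \<le> fact n ^ 4 * real (2*g) ^ m / fact m"
  unfolding Ef12_def
proof (rule ev4)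
  have c: "c1 \<in> {1..n}" "c2 \<in> {1..n}" "c3 \<in> {1..n}" using assms by (auto simp: cells_def)
  show "\<forall>t1\<in>perms n. \<forall>t2\<in>perms n. \<forall>t3\<in>perms n.
     inj_on (\<lambda>d. bx (bx (bx (inv t1 c1) (inv t2 c2)) (inv t3 c3)) d) ({1..n} - {1}) \<and>
     (\<lambda>d. bx (bx (bx (inv t1 c1) (inv t2 c2)) (inv t3 c3)) d) ` ({1..n} - {1}) \<subseteq> {1..n} \<and>
     (\<forall>d\<in>{1..n} - {1}. finite (A (t1 (bx (inv t1 c1) d), t2 (bx (inv t2 c2) d), c3) \<union> A (t1 (bx (inv t1 c1) d), c2, t3 (bx (inv t3 c3) d))) \<and>
        card (A (t1 (bx (inv t1 c1) d), t2 (bx (inv t2 c2) d), c3) \<union> A (t1 (bx (inv t1 c1) d), c2, t3 (bx (inv t3 c3) d))) \<le> 2*g)"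
  proof (intro ballI conjI)
    fix t1 t2 t3 assume ts: "t1 \<in> perms n" "t2 \<in> perms n" "t3 \<in> perms n"
    show "inj_on (\<lambda>d. bx (bx (bx (inv t1 c1) (inv t2 c2)) (inv t3 c3)) d) ({1..n} - {1})"
      by (rule inj_bx[of _ n]) auto
    have iv: "inv t1 c1 \<in> {1..n}" "inv t2 c2 \<in> {1..n}" "inv t3 c3 \<in> {1..n}"
      using perm_inv_in ts c by auto
    show "(\<lambda>d. bx (bx (bx (inv t1 c1) (inv t2 c2)) (inv t3 c3)) d) ` ({1..n} - {1}) \<subseteq> {1..n}"
      using N_bx[OF n] iv by auto
    fix d assume d: "d \<in> {1..n} - {1}"
    have "(t1 (bx (inv t1 c1) d), t2 (bx (inv t2 c2) d), c3) \<in> cells n"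
         "(t1 (bx (inv t1 c1) d), c2, t3 (bx (inv t3 c3) d)) \<in> cells n"
      using perm_in ts N_bx[OF n] iv d c by (auto simp: cells_def)
    hence f: "finite (A (t1 (bx (inv t1 c1) d), t2 (bx (inv t2 c2) d), c3))"
       "card (A (t1 (bx (inv t1 c1) d), t2 (bx (inv t2 c2) d), c3)) \<le> g"
       "finite (A (t1 (bx (inv t1 c1) d), c2, t3 (bx (inv t3 c3) d)))"
       "card (A (t1 (bx (inv t1 c1) d), c2, t3 (bx (inv t3 c3) d))) \<le> g"
      using mc_cell[OF mc] by auto
    thus "finite (A (t1 (bx (inv t1 c1) d), t2 (bx (inv t2 c2) d), c3) \<union> A (t1 (bx (inv t1 c1) d), c2, t3 (bx (inv t3 c3) d)))"
      by simp
    show "card (A (t1 (bx (inv t1 c1) d), t2 (bx (inv t2 c2) d), c3) \<union> A (t1 (bx (inv t1 c1) d), c2, t3 (bx (inv t3 c3) d))) \<le> 2*g"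
      using card_Un_le[of "A (t1 (bx (inv t1 c1) d), t2 (bx (inv t2 c2) d), c3)" "A (t1 (bx (inv t1 c1) d), c2, t3 (bx (inv t3 c3) d))"] f(2,4) by linarith
  qed
qed

lemma Ef3_bound: assumes "(c1,c2,c3) \<in> cells n"
  shows "real (card (Ef3 n A m c1 c2 c3)) \<le> fact n ^ 4 * real g ^ m / fact m"
  unfolding Ef3_def
proof (rule ev4)
  have c: "c1 \<in> {1..n}" "c2 \<in> {1..n}" "c3 \<in> {1..n}" using assms by (auto simp: cells_def)
  show "\<forall>t1\<in>perms n. \<forall>t2\<in>perms n. \<forall>t3\<in>perms n.
     inj_on (\<lambda>d. bx (bx (bx (inv t1 c1) (inv t2 c2)) (inv t3 c3)) d) ({1..n} - {1}) \<and>
     (\<lambda>d. bx (bx (bx (inv t1 c1) (inv t2 c2)) (inv t3 c3)) d) ` ({1..n} - {1}) \<subseteq> {1..n} \<and>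
     (\<forall>d\<in>{1..n} - {1}. finite (A (c1, t2 (bx (inv t2 c2) d), t3 (bx (inv t3 c3) d))) \<and>
        card (A (c1, t2 (bx (inv t2 c2) d), t3 (bx (inv t3 c3) d))) \<le> g)"
  proof (intro ballI conjI)
    fix t1 t2 t3 assume ts: "t1 \<in> perms n" "t2 \<in> perms n" "t3 \<in> perms n"
    show "inj_on (\<lambda>d. bx (bx (bx (inv t1 c1) (inv t2 c2)) (inv t3 c3)) d) ({1..n} - {1})"
      by (rule inj_bx[of _ n]) auto
    have iv: "inv t1 c1 \<in> {1..n}" "inv t2 c2 \<in> {1..n}" "inv t3 c3 \<in> {1..n}"
      using perm_inv_in ts c by auto
    show "(\<lambda>d. bx (bx (bx (inv t1 c1) (inv t2 c2)) (inv t3 c3)) d) ` ({1..n} - {1}) \<subseteq> {1..n}"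
      using N_bx[OF n] iv by auto
    fix d assume d: "d \<in> {1..n} - {1}"
    have "(c1, t2 (bx (inv t2 c2) d), t3 (bx (inv t3 c3) d)) \<in> cells n"
      using perm_in ts N_bx[OF n] iv d c by (auto simp: cells_def)
    thus "finite (A (c1, t2 (bx (inv t2 c2) d), t3 (bx (inv t3 c3) d)))"
       "card (A (c1, t2 (bx (inv t2 c2) d), t3 (bx (inv t3 c3) d))) \<le> g"
      using mc_cell[OF mc] by auto
  qed
qed

lemma Eb_bound: assumes "(c1,c2,c3) \<in> cells n" "e \<in> {1..n}"
  shows "real (card (Eb n A m c1 c2 c3 e)) \<le> fact n ^ 3 * fact (n - 1) * real g ^ m / fact m"
  unfolding Eb_def
proof (rule ev3p[OF assms(2)])
  have c: "c1 \<in> {1..n}" "c2 \<in> {1..n}" "c3 \<in> {1..n}" using assms by (auto simp: cells_def)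
  show "\<forall>t1\<in>perms n. \<forall>t2\<in>perms n. \<forall>t4\<in>perms n.
     inj_on (\<lambda>d. bx e d) ({1..n} - {1}) \<and>
     (\<lambda>d. bx e d) ` ({1..n} - {1}) \<subseteq> {1..n} - {e} \<and>
     (\<forall>d\<in>{1..n} - {1}. finite {z\<in>{1..n}. t4 (bx (bx (inv t1 c1) (inv t2 c2)) e) \<in> A (t1 (bx (inv t1 c1) d), t2 (bx (inv t2 c2) d), z)} \<and>
        card {z\<in>{1..n}. t4 (bx (bx (inv t1 c1) (inv t2 c2)) e) \<in> A (t1 (bx (inv t1 c1) d), t2 (bx (inv t2 c2) d), z)} \<le> g)"
  proof (intro ballI conjI)
    fix t1 t2 t4 assume ts: "t1 \<in> perms n" "t2 \<in> perms n" "t4 \<in> perms n"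
    show "inj_on (\<lambda>d. bx e d) ({1..n} - {1})"
      by (rule inj_bx[of _ n]) auto
    show "(\<lambda>d. bx e d) ` ({1..n} - {1}) \<subseteq> {1..n} - {e}"
    proof
      fix y assume "y \<in> (\<lambda>d. bx e d) ` ({1..n} - {1})"
      then obtain d where d: "d \<in> {1..n} - {1}" "y = bx e d" by blast
      have "bx e d \<in> {1..n}" using N_bx[OF n] assms(2) d(1) by auto
      moreover have "bx e d \<noteq> e" using bx_ne assms(2) d(1) by auto
      ultimately show "y \<in> {1..n} - {e}" using d by auto
    qed
    have iv: "inv t1 c1 \<in> {1..n}" "inv t2 c2 \<in> {1..n}"
      using perm_inv_in ts c by auto
    fix d assume d: "d \<in> {1..n} - {1}"
    have "t1 (bx (inv t1 c1) d) \<in> {1..n}" "t2 (bx (inv t2 c2) d) \<in> {1..n}"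
      using perm_in ts N_bx[OF n] iv d by auto
    thus "finite {z\<in>{1..n}. t4 (bx (bx (inv t1 c1) (inv t2 c2)) e) \<in> A (t1 (bx (inv t1 c1) d), t2 (bx (inv t2 c2) d), z)}"
      "card {z\<in>{1..n}. t4 (bx (bx (inv t1 c1) (inv t2 c2)) e) \<in> A (t1 (bx (inv t1 c1) d), t2 (bx (inv t2 c2) d), z)} \<le> g"
      using mc_k[OF mc] by auto
  qed
qed

end


context
  fixes n t :: nat and A :: "cell \<Rightarrow> nat set" and t1 t2 t3 t4 :: "nat \<Rightarrow> nat"
  assumes n: "n = 2^t" and ts: "t1 \<in> perms n" "t2 \<in> perms n" "t3 \<in> perms n" "t4 \<in> perms n"
begin

abbreviation "LL \<equiv> apply_sigma t1 t2 t3 t4 boolean_cube"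

lemma card_le_img:
  assumes "X \<subseteq> f ` Y" "finite Y"
  shows "card X \<le> card Y"
  by (meson assms card_image_le card_mono finite_imageI order_trans)

lemma P_row: assumes "R \<in> rows n" "\<forall>i\<in>{1..n}. \<forall>kk\<in>{1..n}. (t1,t2,t3,t4) \<notin> Erow n A m i kk"
  shows "card (conflicts n LL A \<inter> R) \<le> m"
proof -
  obtain i kk where ik: "i \<in> {1..n}" "kk \<in> {1..n}" "R = {(i,j',kk) | j'. j' \<in> {1..n}}"
    using assms(1) unfolding rows_def by blast
  let ?Y = "{j\<in>{1..n}. t4 (bx (bx (inv t1 i) (inv t2 j)) (inv t3 kk)) \<in> A (i,j,kk)}"
  have "conflicts n LL A \<inter> R \<subseteq> (\<lambda>j. (i,j,kk)) ` ?Y"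
    using ik(3) by (auto simp: conflicts_def L_def')
  hence "card (conflicts n LL A \<inter> R) \<le> card ?Y" by (rule card_le_img) simp
  moreover have "\<not> m \<le> card ?Y" using assms(2) ik ts by (auto simp: Erow_def)
  ultimately show ?thesis by simp
qed

lemma P_col: assumes "R \<in> columns n" "\<forall>j\<in>{1..n}. \<forall>kk\<in>{1..n}. (t1,t2,t3,t4) \<notin> Ecol n A m j kk"
  shows "card (conflicts n LL A \<inter> R) \<le> m"
proof -
  obtain j kk where ik: "j \<in> {1..n}" "kk \<in> {1..n}" "R = {(i',j,kk) | i'. i' \<in> {1..n}}"
    using assms(1) unfolding columns_def by blast
  let ?Y = "{i\<in>{1..n}. t4 (bx (bx (inv t1 i) (inv t2 j)) (inv t3 kk)) \<in> A (i,j,kk)}"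
  have "conflicts n LL A \<inter> R \<subseteq> (\<lambda>i. (i,j,kk)) ` ?Y"
    using ik(3) by (auto simp: conflicts_def L_def')
  hence "card (conflicts n LL A \<inter> R) \<le> card ?Y" by (rule card_le_img) simp
  moreover have "\<not> m \<le> card ?Y" using assms(2) ik ts by (auto simp: Ecol_def)
  ultimately show ?thesis by simp
qed

lemma P_file: assumes "R \<in> files n" "\<forall>i\<in>{1..n}. \<forall>j\<in>{1..n}. (t1,t2,t3,t4) \<notin> Efile n A m i j"
  shows "card (conflicts n LL A \<inter> R) \<le> m"
proof -
  obtain i j where ik: "i \<in> {1..n}" "j \<in> {1..n}" "R = {(i,j,k') | k'. k' \<in> {1..n}}"
    using assms(1) unfolding files_def by blast
  let ?Y = "{kk\<in>{1..n}. t4 (bx (bx (inv t1 i) (inv t2 j)) (inv t3 kk)) \<in> A (i,j,kk)}"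
  have "conflicts n LL A \<inter> R \<subseteq> (\<lambda>kk. (i,j,kk)) ` ?Y"
    using ik(3) by (auto simp: conflicts_def L_def')
  hence "card (conflicts n LL A \<inter> R) \<le> card ?Y" by (rule card_le_img) simp
  moreover have "\<not> m \<le> card ?Y" using assms(2) ik ts by (auto simp: Efile_def)
  ultimately show ?thesis by simp
qed

lemma L_eq_s: assumes "LL (i,j,k) = s"
  shows "bx (bx (inv t1 i) (inv t2 j)) (inv t3 k) = inv t4 s"
  using assms perm_inv_f[OF ts(4)] by (metis L_def')

lemma P_sym: assumes "S \<in> symbol_sets n LL"
  "\<forall>i\<in>{1..n}. \<forall>s\<in>{1..n}. (t1,t2,t3,t4) \<notin> Esym1 n A m i s"
  "\<forall>j\<in>{1..n}. \<forall>s\<in>{1..n}. (t1,t2,t3,t4) \<notin> Esym2 n A m j s"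
  "\<forall>kk\<in>{1..n}. \<forall>s\<in>{1..n}. (t1,t2,t3,t4) \<notin> Esym3 n A m kk s"
  shows "card (conflicts n LL A \<inter> S) \<le> m"
proof -
  consider (a) i s where "i \<in> {1..n}" "s \<in> {1..n}" "S = {c\<in>cells n. fst c = i \<and> LL c = s}"
    | (b) j s where "j \<in> {1..n}" "s \<in> {1..n}" "S = {c\<in>cells n. fst (snd c) = j \<and> LL c = s}"
    | (c) kk s where "kk \<in> {1..n}" "s \<in> {1..n}" "S = {c\<in>cells n. snd (snd c) = kk \<and> LL c = s}"
    using assms(1) unfolding symbol_sets_def by blast
  then show ?thesis
  proof cases
    case a
    define h where "h j = bx (bx (inv t1 i) (inv t2 j)) (inv t4 s)" for j
    let ?Y = "{j\<in>{1..n}. t3 (h j) \<in> {z\<in>{1..n}. s \<in> A (i,j,z)}}"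
    have "conflicts n LL A \<inter> S \<subseteq> (\<lambda>j. (i,j,t3 (h j))) ` ?Y"
    proof
      fix c assume c: "c \<in> conflicts n LL A \<inter> S"
      then obtain j z where cz: "c = (i,j,z)" "j \<in> {1..n}" "z \<in> {1..n}" "LL c = s" "s \<in> A c"
        using a(3) by (auto simp: conflicts_def cells_def)
      have "bx (bx (inv t1 i) (inv t2 j)) (inv t3 z) = inv t4 s" using L_eq_s cz by simp
      hence "inv t3 z = h j" unfolding h_def using bx_solve3 perm_inv_in[OF ts(3) cz(3)] by auto
      hence "z = t3 (h j)" using perm_f_inv[OF ts(3)] by metis
      thus "c \<in> (\<lambda>j. (i,j,t3 (h j))) ` ?Y" using cz by auto
    qed
    hence "card (conflicts n LL A \<inter> S) \<le> card ?Y" by (rule card_le_img) simp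
    moreover have "\<not> m \<le> card ?Y" using assms(2) a ts by (auto simp: Esym1_def h_def)
    ultimately show ?thesis by simp
  next
    case b
    define h where "h x = bx (bx (inv t1 x) (inv t2 j)) (inv t4 s)" for x
    let ?Y = "{x\<in>{1..n}. t3 (h x) \<in> {z\<in>{1..n}. s \<in> A (x,j,z)}}"
    have "conflicts n LL A \<inter> S \<subseteq> (\<lambda>x. (x,j,t3 (h x))) ` ?Y"
    proof
      fix c assume c: "c \<in> conflicts n LL A \<inter> S"
      then obtain x z where cz: "c = (x,j,z)" "x \<in> {1..n}" "z \<in> {1..n}" "LL c = s" "s \<in> A c"
        using b(3) by (auto simp: conflicts_def cells_def)
      have "bx (bx (inv t1 x) (inv t2 j)) (inv t3 z) = inv t4 s" using L_eq_s cz by simp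
      hence "inv t3 z = h x" unfolding h_def using bx_solve3 perm_inv_in[OF ts(3) cz(3)] by auto
      hence "z = t3 (h x)" using perm_f_inv[OF ts(3)] by metis
      thus "c \<in> (\<lambda>x. (x,j,t3 (h x))) ` ?Y" using cz by auto
    qed
    hence "card (conflicts n LL A \<inter> S) \<le> card ?Y" by (rule card_le_img) simp
    moreover have "\<not> m \<le> card ?Y" using assms(3) b ts by (auto simp: Esym2_def h_def)
    ultimately show ?thesis by simp
  next
    case c
    define h where "h x = bx (bx (inv t1 x) (inv t3 kk)) (inv t4 s)" for x
    let ?Y = "{x\<in>{1..n}. t2 (h x) \<in> {y\<in>{1..n}. s \<in> A (x,y,kk)}}"
    have "conflicts n LL A \<inter> S \<subseteq> (\<lambda>x. (x,t2 (h x),kk)) ` ?Y"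
    proof
      fix cc assume cc: "cc \<in> conflicts n LL A \<inter> S"
      then obtain x y where cz: "cc = (x,y,kk)" "x \<in> {1..n}" "y \<in> {1..n}" "LL cc = s" "s \<in> A cc"
        using c(3) by (auto simp: conflicts_def cells_def)
      have "bx (bx (inv t1 x) (inv t2 y)) (inv t3 kk) = inv t4 s" using L_eq_s cz by simp
      hence "inv t2 y = h x" unfolding h_def using bx_solve perm_inv_in[OF ts(2) cz(3)] by auto
      hence "y = t2 (h x)" using perm_f_inv[OF ts(2)] by metis
      thus "cc \<in> (\<lambda>x. (x,t2 (h x),kk)) ` ?Y" using cz by auto
    qed
    hence "card (conflicts n LL A \<inter> S) \<le> card ?Y" by (rule card_le_img) simp
    moreover have "\<not> m \<le> card ?Y" using assms(4) c ts by (auto simp: Esym3_def h_def)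
    ultimately show ?thesis by simp
  qed
qed

lemma P_tr: assumes T: "transversal_set n LL T"
  and ev: "\<forall>u\<in>{1..n}. \<forall>v\<in>{1..n}. (t1,t2,t3,t4) \<notin> Etr n A m u v"
  shows "card (conflicts n LL A \<inter> T) \<le> m"
proof -
  have Tc: "T \<subseteq> cells n" "card T = n" using T by (auto simp: transversal_set_def)
  have "n \<ge> 1" using n by simp
  hence "T \<noteq> {}" using Tc(2) by auto
  then obtain c0' where "c0' \<in> T" by blast
  then obtain i0 j0 k0 where c0: "(i0,j0,k0) \<in> T" by (cases c0') blast
  have c0N: "i0 \<in> {1..n}" "j0 \<in> {1..n}" "k0 \<in> {1..n}" using c0 Tc(1) by (auto simp: cells_def)
  define u where "u = bx (inv t1 i0) (inv t3 k0)"
  define v where "v = bx (inv t2 j0) (inv t3 k0)"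
  have uv: "u \<in> {1..n}" "v \<in> {1..n}" unfolding u_def v_def
    using N_bx[OF n] perm_inv_in ts c0N by auto
  have key: "bx (inv t1 i) (inv t3 k) = u \<and> bx (inv t2 j) (inv t3 k) = v" if c: "(i,j,k) \<in> T" for i j k
  proof (cases "(i,j,k) = (i0,j0,k0)")
    case True then show ?thesis by (simp add: u_def v_def)
  next
    case False
    have tsd: "\<forall>c\<in>T. \<forall>d\<in>T. c \<noteq> d \<longrightarrow>
        \<not> (fst c = fst d \<and> snd (snd c) = snd (snd d)) \<and>
        \<not> (fst (snd c) = fst (snd d) \<and> snd (snd c) = snd (snd d)) \<and>
        \<not> (fst c = fst d \<and> fst (snd c) = fst (snd d)) \<and>
        LL c \<noteq> LL d \<and>
        (\<exists>!C. is_3cube n LL C \<and> c \<in> C \<and> d \<in> C)"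
      using T unfolding transversal_set_def by (elim conjE)
    note H = tsd[rule_format, OF c c0 False]
    have H': "\<not> (i = i0 \<and> k = k0) \<and> \<not> (j = j0 \<and> k = k0) \<and> \<not> (i = i0 \<and> j = j0) \<and>
      LL (i,j,k) \<noteq> LL (i0,j0,k0) \<and> (\<exists>!C. is_3cube n LL C \<and> (i,j,k) \<in> C \<and> (i0,j0,k0) \<in> C)"
      using H by simp
    have tc: "\<not> (i = i0 \<and> k = k0)" "\<not> (j = j0 \<and> k = k0)" "\<not> (i = i0 \<and> j = j0)"
      "LL (i,j,k) \<noteq> LL (i0,j0,k0)" "\<exists>!C. is_3cube n LL C \<and> (i,j,k) \<in> C \<and> (i0,j0,k0) \<in> C"
      using H' by blast+
    then obtain C where C: "is_3cube n LL C" "(i,j,k) \<in> C" "(i0,j0,k0) \<in> C" by blast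
    show ?thesis using cube_key[OF n ts C tc(1-4)] by (simp add: u_def v_def)
  qed
  let ?Y = "{e\<in>{1..n}. t4 (bx (bx u v) e) \<in> A (t1 (bx u e), t2 (bx v e), t3 e)}"
  have "conflicts n LL A \<inter> T \<subseteq> (\<lambda>e. (t1 (bx u e), t2 (bx v e), t3 e)) ` ?Y"
  proof
    fix c assume cc: "c \<in> conflicts n LL A \<inter> T"
    obtain i j k where ijk: "c = (i,j,k)" by (cases c) blast
    have cT: "(i,j,k) \<in> T" and cN: "i \<in> {1..n}" "j \<in> {1..n}" "k \<in> {1..n}" and cf: "LL (i,j,k) \<in> A (i,j,k)"
      using cc ijk Tc(1) by (auto simp: conflicts_def cells_def)
    define e where "e = inv t3 k"
    have eN: "e \<in> {1..n}" using perm_inv_in[OF ts(3) cN(3)] by (simp add: e_def)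
    have kk: "bx (inv t1 i) e = u" "bx (inv t2 j) e = v" using key[OF cT] by (auto simp: e_def)
    have "inv t1 i = bx u e" using bx_solve1[OF _ kk(1)] perm_inv_in[OF ts(1) cN(1)] by auto
    hence i: "i = t1 (bx u e)" using perm_f_inv[OF ts(1)] by metis
    have "inv t2 j = bx v e" using bx_solve1[OF _ kk(2)] perm_inv_in[OF ts(2) cN(2)] by auto
    hence j: "j = t2 (bx v e)" using perm_f_inv[OF ts(2)] by metis
    have k: "k = t3 e" using perm_f_inv[OF ts(3)] by (simp add: e_def)
    have "LL (i,j,k) = t4 (bx (bx (bx u e) (bx v e)) e)" using i j k by (simp add: L_val[OF ts(1-3)])
    also have "bx (bx (bx u e) (bx v e)) e = bx (bx u v) e" by (simp add: bxs)
    finally have "LL (i,j,k) = t4 (bx (bx u v) e)" .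
    hence "e \<in> ?Y" using cf eN i j k by simp
    thus "c \<in> (\<lambda>e. (t1 (bx u e), t2 (bx v e), t3 e)) ` ?Y" using ijk i j k by auto
  qed
  hence "card (conflicts n LL A \<inter> T) \<le> card ?Y" by (rule card_le_img) simp
  moreover have "\<not> m \<le> card ?Y" using ev uv ts by (auto simp: Etr_def)
  ultimately show ?thesis by simp
qed

lemma cube_cells: "is_3cube n L C \<Longrightarrow> C \<subseteq> cells n"
  unfolding is_3cube_def cells_def by blast

lemma P_f: assumes mc: "mcube n g A" and c: "(c1,c2,c3) \<in> cells n"
  and ev1: "(t1,t2,t3,t4) \<notin> Ef12 n A r c1 c2 c3"
  and ev2: "(t1,t2,t3,t4) \<notin> Ef3 n A m3 c1 c2 c3"
  and ev3: "(t1,t2,t3,t4) \<notin> Eb n A r c1 c2 c3 (inv t3 c3)"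
  shows "real (card {C. allowed_3cube n LL A C \<and> (c1,c2,c3) \<in> C})
     \<ge> real n - 1 - 4 * real g - (real r - 1) - (real r - 1) - (real m3 - 1)"
proof -
  have cN: "c1 \<in> {1..n}" "c2 \<in> {1..n}" "c3 \<in> {1..n}" using c by (auto simp: cells_def)
  define a where "a = inv t1 c1"
  define b where "b = inv t2 c2"
  define e where "e = inv t3 c3"
  have abe: "a \<in> {1..n}" "b \<in> {1..n}" "e \<in> {1..n}" unfolding a_def b_def e_def
    using perm_inv_in ts cN by auto
  have cc: "t1 a = c1" "t2 b = c2" "t3 e = c3" unfolding a_def b_def e_def using perm_f_inv ts by auto
  define x where "x = bx (bx a b) e"
  define D0 where "D0 = {1..n} - {1::nat}"
  define B0 where "B0 = {d\<in>D0. t4 (bx x d) \<in> A (c1,c2,c3)}"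
  define Bl1 where "Bl1 = {d\<in>D0. t4 x \<in> A (t1 (bx a d), c2, c3)}"
  define Bl2 where "Bl2 = {d\<in>D0. t4 x \<in> A (c1, t2 (bx b d), c3)}"
  define Bl3 where "Bl3 = {d\<in>D0. t4 x \<in> A (c1, c2, t3 (bx e d))}"
  define B12 where "B12 = {d\<in>D0. t4 (bx x d) \<in> A (t1 (bx a d), t2 (bx b d), c3) \<union> A (t1 (bx a d), c2, t3 (bx e d))}"
  define B3 where "B3 = {d\<in>D0. t4 (bx x d) \<in> A (c1, t2 (bx b d), t3 (bx e d))}"
  define Bb where "Bb = {d\<in>D0. t3 (bx e d) \<in> {z\<in>{1..n}. t4 x \<in> A (t1 (bx a d), t2 (bx b d), z)}}"
  define Bad where "Bad = B0 \<union> Bl1 \<union> Bl2 \<union> Bl3 \<union> B12 \<union> B3 \<union> Bb"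
  define G where "G = D0 - Bad"
  define \<phi> where "\<phi> d = {t1 a, t1 (bx a d)} \<times> {t2 b, t2 (bx b d)} \<times> {t3 e, t3 (bx e d)}" for d
  have fD0: "finite D0" by (simp add: D0_def)
  have dN: "d \<in> {1..n}" "d \<noteq> 1" "d \<ge> 1" if "d \<in> D0" for d using that by (auto simp: D0_def)
  have img: "\<phi> ` G \<subseteq> {C. allowed_3cube n LL A C \<and> (c1,c2,c3) \<in> C}"
  proof
    fix C assume "C \<in> \<phi> ` G"
    then obtain d where d: "d \<in> G" "C = \<phi> d" by blast
    have dD: "d \<in> D0" "d \<notin> Bad" using d(1) by (auto simp: G_def)
    note cd = cube_d[OF n ts abe dN(1)[OF dD(1)] dN(2)[OF dD(1)] \<phi>_def refl x_def]
    have t3N: "t3 (bx e d) \<in> {1..n}" using perm_in[OF ts(3) N_bx[OF n abe(3) dN(1)[OF dD(1)]]] .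
    have "allowed_3cube n LL A (\<phi> d)"
      apply (rule cd(4)[where A=A])
      using dD cc t3N by (auto simp: Bad_def B0_def Bl1_def Bl2_def Bl3_def B12_def B3_def Bb_def
          perm_in[OF ts(3)] N_bx[OF n] abe)
    moreover have "(c1,c2,c3) \<in> \<phi> d" using cd(2) cc by simp
    ultimately show "C \<in> {C. allowed_3cube n LL A C \<and> (c1,c2,c3) \<in> C}" using d by simp
  qed
  have injphi: "inj_on \<phi> G"
  proof (rule inj_onI)
    fix d d' assume dd: "d \<in> G" "d' \<in> G" "\<phi> d = \<phi> d'"
    have eq: "{t1 a, t1 (bx a d)} \<times> ({t2 b, t2 (bx b d)} \<times> {t3 e, t3 (bx e d)}) =
       {t1 a, t1 (bx a d')} \<times> ({t2 b, t2 (bx b d')} \<times> {t3 e, t3 (bx e d')})"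
      using dd(3) by (simp add: \<phi>_def)
    have dG: "d \<in> {1..n} - {1}" "d' \<in> {1..n} - {1}" using dd(1,2) by (auto simp: G_def D0_def)
    have yy: "(t2 b, t3 e) \<in> {t2 b, t2 (bx b d)} \<times> {t3 e, t3 (bx e d)}" by simp
    show "d = d'" by (rule cube_d_inj[OF n ts(1) abe(1) dG eq yy])
  qed
  have fin: "finite {C. allowed_3cube n LL A C \<and> (c1,c2,c3) \<in> C}"
  proof (rule finite_subset)
    show "{C. allowed_3cube n LL A C \<and> (c1,c2,c3) \<in> C} \<subseteq> Pow (cells n)"
      using cube_cells by (auto simp: allowed_3cube_def)
    show "finite (Pow (cells n))" by (simp add: cells_def)
  qed
  have cG: "card G \<le> card {C. allowed_3cube n LL A C \<and> (c1,c2,c3) \<in> C}"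
    using card_inj_on_le[OF injphi img fin] .
  have fB: "finite B0" "finite Bl1" "finite Bl2" "finite Bl3" "finite B12" "finite B3" "finite Bb"
    using fD0 by (auto simp: B0_def Bl1_def Bl2_def Bl3_def B12_def B3_def Bb_def)
  have xge: "x \<ge> 1" unfolding x_def by (rule bx_ge1)
  have cB0: "card B0 \<le> g"
  proof -
    have "card B0 \<le> card (A (c1,c2,c3))"
    proof (rule card_inj_on_le[of "\<lambda>d. t4 (bx x d)"])
      show "inj_on (\<lambda>d. t4 (bx x d)) B0"
      proof (rule inj_onI)
        fix d d' assume dd: "d \<in> B0" "d' \<in> B0" "t4 (bx x d) = t4 (bx x d')"
        have "d \<in> D0" "d' \<in> D0" using dd(1,2) by (simp_all add: B0_def)
        hence "d \<ge> 1" "d' \<ge> 1" using dN by blast+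
        moreover have "bx x d = bx x d'" using dd(3) perm_inj[OF ts(4)] by blast
        ultimately show "d = d'" using bx_inj by blast
      qed
      show "(\<lambda>d. t4 (bx x d)) ` B0 \<subseteq> A (c1,c2,c3)" by (auto simp: B0_def)
      show "finite (A (c1,c2,c3))" using mc_cell[OF mc c] by simp
    qed
    thus ?thesis using mc_cell[OF mc c] by simp
  qed
  have cBl1: "card Bl1 \<le> g"
  proof -
    have "card Bl1 \<le> card {i\<in>{1..n}. t4 x \<in> A (i,c2,c3)}"
    proof (rule card_inj_on_le[of "\<lambda>d. t1 (bx a d)"])
      show "inj_on (\<lambda>d. t1 (bx a d)) Bl1"
      proof (rule inj_onI)
        fix d d' assume dd: "d \<in> Bl1" "d' \<in> Bl1" "t1 (bx a d) = t1 (bx a d')"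
        have "d \<in> D0" "d' \<in> D0" using dd(1,2) by (simp_all add: Bl1_def)
        hence "d \<ge> 1" "d' \<ge> 1" using dN by blast+
        moreover have "bx a d = bx a d'" using dd(3) perm_inj[OF ts(1)] by blast
        ultimately show "d = d'" using bx_inj by blast
      qed
      show "(\<lambda>d. t1 (bx a d)) ` Bl1 \<subseteq> {i\<in>{1..n}. t4 x \<in> A (i,c2,c3)}"
      proof
        fix y assume "y \<in> (\<lambda>d. t1 (bx a d)) ` Bl1"
        then obtain d where d: "d \<in> Bl1" "y = t1 (bx a d)" by blast
        have dD: "d \<in> D0" and dA: "t4 x \<in> A (t1 (bx a d), c2, c3)" using d(1) by (simp_all add: Bl1_def)
        have "t1 (bx a d) \<in> {1..n}" using perm_in[OF ts(1) N_bx[OF n abe(1) dN(1)[OF dD]]] .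
        thus "y \<in> {i\<in>{1..n}. t4 x \<in> A (i,c2,c3)}" using d(2) dA by simp
      qed
    qed simp
    thus ?thesis using mc_i[OF mc cN(2,3)] by (meson le_trans)
  qed
  have cBl2: "card Bl2 \<le> g"
  proof -
    have "card Bl2 \<le> card {j\<in>{1..n}. t4 x \<in> A (c1,j,c3)}"
    proof (rule card_inj_on_le[of "\<lambda>d. t2 (bx b d)"])
      show "inj_on (\<lambda>d. t2 (bx b d)) Bl2"
      proof (rule inj_onI)
        fix d d' assume dd: "d \<in> Bl2" "d' \<in> Bl2" "t2 (bx b d) = t2 (bx b d')"
        have "d \<in> D0" "d' \<in> D0" using dd(1,2) by (simp_all add: Bl2_def)
        hence "d \<ge> 1" "d' \<ge> 1" using dN by blast+
        moreover have "bx b d = bx b d'" using dd(3) perm_inj[OF ts(2)] by blast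
        ultimately show "d = d'" using bx_inj by blast
      qed
      show "(\<lambda>d. t2 (bx b d)) ` Bl2 \<subseteq> {j\<in>{1..n}. t4 x \<in> A (c1,j,c3)}"
      proof
        fix y assume "y \<in> (\<lambda>d. t2 (bx b d)) ` Bl2"
        then obtain d where d: "d \<in> Bl2" "y = t2 (bx b d)" by blast
        have dD: "d \<in> D0" and dA: "t4 x \<in> A (c1, t2 (bx b d), c3)" using d(1) by (simp_all add: Bl2_def)
        have "t2 (bx b d) \<in> {1..n}" using perm_in[OF ts(2) N_bx[OF n abe(2) dN(1)[OF dD]]] .
        thus "y \<in> {j\<in>{1..n}. t4 x \<in> A (c1,j,c3)}" using d(2) dA by simp
      qed
    qed simp
    thus ?thesis using mc_j[OF mc cN(1,3)] by (meson le_trans)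
  qed
  have cBl3: "card Bl3 \<le> g"
  proof -
    have "card Bl3 \<le> card {k\<in>{1..n}. t4 x \<in> A (c1,c2,k)}"
    proof (rule card_inj_on_le[of "\<lambda>d. t3 (bx e d)"])
      show "inj_on (\<lambda>d. t3 (bx e d)) Bl3"
      proof (rule inj_onI)
        fix d d' assume dd: "d \<in> Bl3" "d' \<in> Bl3" "t3 (bx e d) = t3 (bx e d')"
        have "d \<in> D0" "d' \<in> D0" using dd(1,2) by (simp_all add: Bl3_def)
        hence "d \<ge> 1" "d' \<ge> 1" using dN by blast+
        moreover have "bx e d = bx e d'" using dd(3) perm_inj[OF ts(3)] by blast
        ultimately show "d = d'" using bx_inj by blast
      qed
      show "(\<lambda>d. t3 (bx e d)) ` Bl3 \<subseteq> {k\<in>{1..n}. t4 x \<in> A (c1,c2,k)}"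
      proof
        fix y assume "y \<in> (\<lambda>d. t3 (bx e d)) ` Bl3"
        then obtain d where d: "d \<in> Bl3" "y = t3 (bx e d)" by blast
        have dD: "d \<in> D0" and dA: "t4 x \<in> A (c1, c2, t3 (bx e d))" using d(1) by (simp_all add: Bl3_def)
        have "t3 (bx e d) \<in> {1..n}" using perm_in[OF ts(3) N_bx[OF n abe(3) dN(1)[OF dD]]] .
        thus "y \<in> {k\<in>{1..n}. t4 x \<in> A (c1,c2,k)}" using d(2) dA by simp
      qed
    qed simp
    thus ?thesis using mc_k[OF mc cN(1,2)] by (meson le_trans)
  qed
  have cB12: "real (card B12) \<le> real r - 1"
  proof -
    have "\<not> r \<le> card B12" using ev1 ts
      by (simp add: Ef12_def B12_def D0_def x_def a_def b_def e_def)
    thus ?thesis by simp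
  qed
  have cB3: "real (card B3) \<le> real m3 - 1"
  proof -
    have "\<not> m3 \<le> card B3" using ev2 ts
      by (simp add: Ef3_def B3_def D0_def x_def a_def b_def e_def)
    thus ?thesis by simp
  qed
  have cBb: "real (card Bb) \<le> real r - 1"
  proof -
    have "\<not> r \<le> card Bb" using ev3 ts cc(3)
      by (simp add: Eb_def Bb_def D0_def x_def a_def b_def e_def)
    thus ?thesis by simp
  qed
  have un: "real (card (X \<union> Y)) \<le> real (card X) + real (card Y)" for X Y :: "nat set"
    using card_Un_le[of X Y] by linarith
  have cBad: "real (card Bad) \<le> real (card B0) + real (card Bl1) + real (card Bl2) + real (card Bl3)
      + real (card B12) + real (card B3) + real (card Bb)"
    unfolding Bad_def
    by (smt (verit) un[of B0 Bl1] un[of "B0 \<union> Bl1" Bl2] un[of "B0 \<union> Bl1 \<union> Bl2" Bl3]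
      un[of "B0 \<union> Bl1 \<union> Bl2 \<union> Bl3" B12] un[of "B0 \<union> Bl1 \<union> Bl2 \<union> Bl3 \<union> B12" B3]
      un[of "B0 \<union> Bl1 \<union> Bl2 \<union> Bl3 \<union> B12 \<union> B3" Bb])
  have fBad: "finite Bad" using fB by (simp add: Bad_def)
  have "card D0 - card Bad \<le> card G" unfolding G_def by (rule diff_card_le_card_Diff[OF fBad])
  hence "real (card D0) - real (card Bad) \<le> real (card G)" by linarith
  moreover have "card D0 = n - 1" using n by (simp add: D0_def)
  moreover have "n \<ge> 1" using n by simp
  ultimately have "real n - 1 - real (card Bad) \<le> real (card G)" by (simp add: of_nat_diff)
  thus ?thesis using cG cBad cB0 cBl1 cBl2 cBl3 cB12 cB3 cBb by linarith
qed

end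


lemma card_UN_bound:
  assumes "finite I" "\<And>i. i \<in> I \<Longrightarrow> real (card (E i)) \<le> M"
  shows "real (card (\<Union>i\<in>I. E i)) \<le> real (card I) * M"
proof -
  have "card (\<Union>i\<in>I. E i) \<le> (\<Sum>i\<in>I. card (E i))" by (rule card_UN_le[OF assms(1)])
  hence "real (card (\<Union>i\<in>I. E i)) \<le> (\<Sum>i\<in>I. real (card (E i)))" by (metis of_nat_le_iff of_nat_sum)
  also have "\<dots> \<le> (\<Sum>i\<in>I. M)" by (rule sum_mono) (use assms(2) in auto)
  finally show ?thesis by simp
qed

lemma notin_UN: "x \<notin> (\<Union>p\<in>I. E p) \<Longrightarrow> p \<in> I \<Longrightarrow> x \<notin> E p"
  by blast

lemma E_subs: "Erow n A m i kk \<subseteq> Omega n" "Ecol n A m j kk \<subseteq> Omega n" "Efile n A m i j \<subseteq> Omega n"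
  "Esym1 n A m i s \<subseteq> Omega n" "Esym2 n A m j s \<subseteq> Omega n" "Esym3 n A m kk s \<subseteq> Omega n"
  "Etr n A m u v \<subseteq> Omega n" "Ef12 n A m c1 c2 c3 \<subseteq> Omega n" "Ef3 n A m c1 c2 c3 \<subseteq> Omega n"
  "Eb n A m c1 c2 c3 e \<subseteq> Omega n"
  by (auto simp: Erow_def Ecol_def Efile_def Esym1_def Esym2_def Esym3_def Etr_def Ef12_def Ef3_def Eb_def)

lemma card_Un_real: "real (card (X \<union> Y)) \<le> real (card X) + real (card Y)"
  using card_Un_le[of X Y] by linarith

lemma exists_good:
  fixes n t g k r m3 :: nat and A :: "cell \<Rightarrow> nat set"
  assumes n: "n = 2^t" and mc: "mcube n g A"
    and ineq: "7 * real n ^ 2 * real g ^ k / fact k + 3 * real n ^ 3 * (2 * real g) ^ r / fact r < 1"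
    and h3: "real g ^ m3 / fact m3 \<le> (2 * real g) ^ r / fact r"
  shows "\<exists>t1 t2 t3 t4. (t1,t2,t3,t4) \<in> Omega n \<and>
     (\<forall>i\<in>{1..n}. \<forall>kk\<in>{1..n}. (t1,t2,t3,t4) \<notin> Erow n A k i kk) \<and>
     (\<forall>j\<in>{1..n}. \<forall>kk\<in>{1..n}. (t1,t2,t3,t4) \<notin> Ecol n A k j kk) \<and>
     (\<forall>i\<in>{1..n}. \<forall>j\<in>{1..n}. (t1,t2,t3,t4) \<notin> Efile n A k i j) \<and>
     (\<forall>i\<in>{1..n}. \<forall>s\<in>{1..n}. (t1,t2,t3,t4) \<notin> Esym1 n A k i s) \<and>
     (\<forall>j\<in>{1..n}. \<forall>s\<in>{1..n}. (t1,t2,t3,t4) \<notin> Esym2 n A k j s) \<and>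
     (\<forall>kk\<in>{1..n}. \<forall>s\<in>{1..n}. (t1,t2,t3,t4) \<notin> Esym3 n A k kk s) \<and>
     (\<forall>u\<in>{1..n}. \<forall>v\<in>{1..n}. (t1,t2,t3,t4) \<notin> Etr n A k u v) \<and>
     (\<forall>c1 c2 c3. (c1,c2,c3) \<in> cells n \<longrightarrow>
        (t1,t2,t3,t4) \<notin> Ef12 n A r c1 c2 c3 \<and> (t1,t2,t3,t4) \<notin> Ef3 n A m3 c1 c2 c3 \<and>
        (\<forall>e\<in>{1..n}. (t1,t2,t3,t4) \<notin> Eb n A r c1 c2 c3 e))"
proof -
  let ?N = "{1..n}"
  let ?F = "fact n :: real"
  define a where "a = ?F ^ 4 * real g ^ k / fact k"
  define q where "q = (2 * real g) ^ r / fact r"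
  define BR where "BR = (\<Union>p\<in>?N\<times>?N. Erow n A k (fst p) (snd p))"
  define BC where "BC = (\<Union>p\<in>?N\<times>?N. Ecol n A k (fst p) (snd p))"
  define BF where "BF = (\<Union>p\<in>?N\<times>?N. Efile n A k (fst p) (snd p))"
  define BS1 where "BS1 = (\<Union>p\<in>?N\<times>?N. Esym1 n A k (fst p) (snd p))"
  define BS2 where "BS2 = (\<Union>p\<in>?N\<times>?N. Esym2 n A k (fst p) (snd p))"
  define BS3 where "BS3 = (\<Union>p\<in>?N\<times>?N. Esym3 n A k (fst p) (snd p))"
  define BT where "BT = (\<Union>p\<in>?N\<times>?N. Etr n A k (fst p) (snd p))"
  define B12 where "B12 = (\<Union>c\<in>cells n. Ef12 n A r (fst c) (fst (snd c)) (snd (snd c)))"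
  define B3 where "B3 = (\<Union>c\<in>cells n. Ef3 n A m3 (fst c) (fst (snd c)) (snd (snd c)))"
  define BB where "BB = (\<Union>p\<in>cells n \<times> ?N. Eb n A r (fst (fst p)) (fst (snd (fst p))) (snd (snd (fst p))) (snd p))"
  define Bad where "Bad = BR \<union> BC \<union> BF \<union> BS1 \<union> BS2 \<union> BS3 \<union> BT \<union> B12 \<union> B3 \<union> BB"
  have fN: "finite (?N \<times> ?N)" by simp
  have cNN: "real (card (?N \<times> ?N)) = real n ^ 2" by (simp add: power2_eq_square)
  have fC: "finite (cells n)" by (simp add: cells_def)
  have cC: "real (card (cells n)) = real n ^ 3" by (simp add: cells_def card_cartesian_product power3_eq_cube)
  have fCN: "finite (cells n \<times> ?N)" using fC by simp
  have cCN: "real (card (cells n \<times> ?N)) = real n ^ 4"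
    using cC by (simp add: card_cartesian_product power_Suc2[symmetric] numeral_eq_Suc)
  have cellsplit: "(fst c, fst (snd c), snd (snd c)) \<in> cells n" if "c \<in> cells n" for c
    using that by simp
  have bR: "real (card BR) \<le> real n ^ 2 * a" unfolding BR_def cNN[symmetric] a_def
    by (rule card_UN_bound[OF fN]) (auto intro!: Erow_bound[OF n mc])
  have bC: "real (card BC) \<le> real n ^ 2 * a" unfolding BC_def cNN[symmetric] a_def
    by (rule card_UN_bound[OF fN]) (auto intro!: Ecol_bound[OF n mc])
  have bF: "real (card BF) \<le> real n ^ 2 * a" unfolding BF_def cNN[symmetric] a_def
    by (rule card_UN_bound[OF fN]) (auto intro!: Efile_bound[OF n mc])
  have bS1: "real (card BS1) \<le> real n ^ 2 * a" unfolding BS1_def cNN[symmetric] a_def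
    by (rule card_UN_bound[OF fN]) (auto intro!: Esym1_bound[OF n mc])
  have bS2: "real (card BS2) \<le> real n ^ 2 * a" unfolding BS2_def cNN[symmetric] a_def
    by (rule card_UN_bound[OF fN]) (auto intro!: Esym2_bound[OF n mc])
  have bS3: "real (card BS3) \<le> real n ^ 2 * a" unfolding BS3_def cNN[symmetric] a_def
    by (rule card_UN_bound[OF fN]) (auto intro!: Esym3_bound[OF n mc])
  have bT: "real (card BT) \<le> real n ^ 2 * a" unfolding BT_def cNN[symmetric] a_def
    by (rule card_UN_bound[OF fN]) (auto intro!: Etr_bound[OF n mc])
  have b12: "real (card B12) \<le> real n ^ 3 * (?F ^ 4 * q)" unfolding B12_def cC[symmetric] q_def
  proof (rule card_UN_bound[OF fC])
    fix c assume "c \<in> cells n"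
    thus "real (card (Ef12 n A r (fst c) (fst (snd c)) (snd (snd c)))) \<le> ?F ^ 4 * ((2 * real g) ^ r / fact r)"
      using Ef12_bound[OF n mc cellsplit[of c], of r] by simp
  qed
  have b3: "real (card B3) \<le> real n ^ 3 * (?F ^ 4 * q)" unfolding B3_def cC[symmetric]
  proof (rule card_UN_bound[OF fC])
    fix c assume "c \<in> cells n"
    hence "real (card (Ef3 n A m3 (fst c) (fst (snd c)) (snd (snd c)))) \<le> ?F ^ 4 * real g ^ m3 / fact m3"
      using Ef3_bound[OF n mc cellsplit[of c], of m3] by simp
    also have "\<dots> = ?F ^ 4 * (real g ^ m3 / fact m3)" by simp
    also have "\<dots> \<le> ?F ^ 4 * q" using h3 by (intro mult_left_mono) (auto simp: q_def)
    finally show "real (card (Ef3 n A m3 (fst c) (fst (snd c)) (snd (snd c)))) \<le> ?F ^ 4 * q" .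
  qed
  have bB: "real (card BB) \<le> real n ^ 4 * (?F ^ 3 * fact (n - 1) * q)" unfolding BB_def cCN[symmetric]
  proof (rule card_UN_bound[OF fCN])
    fix p assume p: "p \<in> cells n \<times> ?N"
    hence "real (card (Eb n A r (fst (fst p)) (fst (snd (fst p))) (snd (snd (fst p))) (snd p)))
      \<le> ?F ^ 3 * fact (n - 1) * real g ^ r / fact r"
      using Eb_bound[OF n mc cellsplit[of "fst p"], of "snd p" r] by auto
    also have "\<dots> = ?F ^ 3 * fact (n - 1) * (real g ^ r / fact r)" by simp
    also have "\<dots> \<le> ?F ^ 3 * fact (n - 1) * q"
    proof (intro mult_left_mono)
      have "real g ^ r \<le> (2 * real g) ^ r" by (intro power_mono) auto
      thus "real g ^ r / fact r \<le> q" unfolding q_def by (intro divide_right_mono) auto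
    qed simp
    finally show "real (card (Eb n A r (fst (fst p)) (fst (snd (fst p))) (snd (snd (fst p))) (snd p)))
      \<le> ?F ^ 3 * fact (n - 1) * q" .
  qed
  have n1: "n \<ge> 1" using n by simp
  have factn: "?F = real n * fact (n - 1)" by (rule fact_reduce) (use n1 in simp)
  have bB': "real n ^ 4 * (?F ^ 3 * fact (n - 1) * q) = real n ^ 3 * (?F ^ 4 * q)"
    using factn by (simp add: power_Suc2[symmetric] numeral_eq_Suc algebra_simps)
  have cBad: "real (card Bad) \<le> 7 * (real n ^ 2 * a) + 3 * (real n ^ 3 * (?F ^ 4 * q))"
  proof -
    have "real (card Bad) \<le> real (card BR) + real (card BC) + real (card BF) + real (card BS1)
       + real (card BS2) + real (card BS3) + real (card BT) + real (card B12) + real (card B3) + real (card BB)"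
      unfolding Bad_def
      by (smt (verit) card_Un_real[of BR BC] card_Un_real[of "BR \<union> BC" BF]
        card_Un_real[of "BR \<union> BC \<union> BF" BS1] card_Un_real[of "BR \<union> BC \<union> BF \<union> BS1" BS2]
        card_Un_real[of "BR \<union> BC \<union> BF \<union> BS1 \<union> BS2" BS3]
        card_Un_real[of "BR \<union> BC \<union> BF \<union> BS1 \<union> BS2 \<union> BS3" BT]
        card_Un_real[of "BR \<union> BC \<union> BF \<union> BS1 \<union> BS2 \<union> BS3 \<union> BT" B12]
        card_Un_real[of "BR \<union> BC \<union> BF \<union> BS1 \<union> BS2 \<union> BS3 \<union> BT \<union> B12" B3]
        card_Un_real[of "BR \<union> BC \<union> BF \<union> BS1 \<union> BS2 \<union> BS3 \<union> BT \<union> B12 \<union> B3" BB])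
    thus ?thesis using bR bC bF bS1 bS2 bS3 bT b12 b3 bB bB' by linarith
  qed
  have "7 * (real n ^ 2 * a) + 3 * (real n ^ 3 * (?F ^ 4 * q))
      = ?F ^ 4 * (7 * real n ^ 2 * real g ^ k / fact k + 3 * real n ^ 3 * (2 * real g) ^ r / fact r)"
    by (simp add: a_def q_def algebra_simps)
  also have "\<dots> < ?F ^ 4 * 1" using ineq by (intro mult_strict_left_mono) auto
  finally have lt: "real (card Bad) < ?F ^ 4" using cBad by simp
  have cO: "real (card (Omega n)) = ?F ^ 4"
    by (simp add: card_cartesian_product perms_card power_Suc2[symmetric] numeral_eq_Suc)
  have "\<not> Omega n \<subseteq> Bad"
  proof
    assume sub: "Omega n \<subseteq> Bad"
    have fO: "finite (Omega n)" using perms_finite by simp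
    have "Bad \<subseteq> Omega n"
      unfolding Bad_def BR_def BC_def BF_def BS1_def BS2_def BS3_def BT_def B12_def B3_def BB_def
      by (intro Un_least UN_least E_subs)
    hence "finite Bad" using fO finite_subset by blast
    hence "card (Omega n) \<le> card Bad" using sub card_mono by blast
    thus False using lt cO by linarith
  qed
  then obtain \<sigma> where \<sigma>: "\<sigma> \<in> Omega n" "\<sigma> \<notin> Bad" by blast
  obtain t1 t2 t3 t4 where st: "\<sigma> = (t1,t2,t3,t4)" by (cases \<sigma>) blast
  have nB: "\<sigma> \<notin> BR" "\<sigma> \<notin> BC" "\<sigma> \<notin> BF" "\<sigma> \<notin> BS1" "\<sigma> \<notin> BS2" "\<sigma> \<notin> BS3" "\<sigma> \<notin> BT"
    "\<sigma> \<notin> B12" "\<sigma> \<notin> B3" "\<sigma> \<notin> BB" using \<sigma>(2) unfolding Bad_def by blast+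
  have r1: "\<forall>i\<in>?N. \<forall>kk\<in>?N. \<sigma> \<notin> Erow n A k i kk"
    using notin_UN[OF nB(1)[unfolded BR_def], of "(i,kk)" for i kk] by simp
  have r2: "\<forall>i\<in>?N. \<forall>kk\<in>?N. \<sigma> \<notin> Ecol n A k i kk"
    using notin_UN[OF nB(2)[unfolded BC_def], of "(i,kk)" for i kk] by simp
  have r3: "\<forall>i\<in>?N. \<forall>kk\<in>?N. \<sigma> \<notin> Efile n A k i kk"
    using notin_UN[OF nB(3)[unfolded BF_def], of "(i,kk)" for i kk] by simp
  have r4: "\<forall>i\<in>?N. \<forall>kk\<in>?N. \<sigma> \<notin> Esym1 n A k i kk"
    using notin_UN[OF nB(4)[unfolded BS1_def], of "(i,kk)" for i kk] by simp
  have r5: "\<forall>i\<in>?N. \<forall>kk\<in>?N. \<sigma> \<notin> Esym2 n A k i kk"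
    using notin_UN[OF nB(5)[unfolded BS2_def], of "(i,kk)" for i kk] by simp
  have r6: "\<forall>i\<in>?N. \<forall>kk\<in>?N. \<sigma> \<notin> Esym3 n A k i kk"
    using notin_UN[OF nB(6)[unfolded BS3_def], of "(i,kk)" for i kk] by simp
  have r7: "\<forall>i\<in>?N. \<forall>kk\<in>?N. \<sigma> \<notin> Etr n A k i kk"
    using notin_UN[OF nB(7)[unfolded BT_def], of "(i,kk)" for i kk] by simp
  have r8: "\<forall>c1 c2 c3. (c1,c2,c3) \<in> cells n \<longrightarrow>
        \<sigma> \<notin> Ef12 n A r c1 c2 c3 \<and> \<sigma> \<notin> Ef3 n A m3 c1 c2 c3 \<and> (\<forall>e\<in>?N. \<sigma> \<notin> Eb n A r c1 c2 c3 e)"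
  proof (intro allI impI conjI ballI)
    fix c1 c2 c3 assume c: "(c1,c2,c3) \<in> cells n"
    show "\<sigma> \<notin> Ef12 n A r c1 c2 c3" using notin_UN[OF nB(8)[unfolded B12_def] c] by simp
    show "\<sigma> \<notin> Ef3 n A m3 c1 c2 c3" using notin_UN[OF nB(9)[unfolded B3_def] c] by simp
    fix e assume "e \<in> ?N"
    hence "((c1,c2,c3),e) \<in> cells n \<times> ?N" using c by simp
    thus "\<sigma> \<notin> Eb n A r c1 c2 c3 e" using notin_UN[OF nB(10)[unfolded BB_def]] by fastforce
  qed
  show ?thesis using \<sigma>(1) r1 r2 r3 r4 r5 r6 r7 r8 unfolding st by blast
qed


theorem mainTheorem2:
  fixes \<alpha> \<gamma> \<kappa> :: real and t n g k r :: nat and A :: "cell \<Rightarrow> nat set"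
  assumes n_def: "n = 2 ^ t"
    and g_def: "real g = \<gamma> * real n"
    and k_def: "real k = \<kappa> * real n"
    and r_def: "real r = (1 - \<alpha> - 2 * \<gamma>) * real n / 3"
    and ineq: "7 * real n ^ 2 * (real g) ^ k / fact k
               + 3 * real n ^ 3 * (2 * real g) ^ r / fact r < 1"
    and A: "mcube n g A"
  shows "\<exists>\<tau>1 \<tau>2 \<tau>3 \<tau>4.
     \<tau>1 permutes {1..n} \<and> \<tau>2 permutes {1..n} \<and> \<tau>3 permutes {1..n} \<and> \<tau>4 permutes {1..n} \<and>
     (let L = apply_sigma \<tau>1 \<tau>2 \<tau>3 \<tau>4 boolean_cube in
       (\<forall>R\<in>rows n. card (conflicts n L A \<inter> R) \<le> k) \<and>
       (\<forall>R\<in>columns n. card (conflicts n L A \<inter> R) \<le> k) \<and>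
       (\<forall>R\<in>files n. card (conflicts n L A \<inter> R) \<le> k) \<and>
       (\<forall>S\<in>symbol_sets n L. card (conflicts n L A \<inter> S) \<le> k) \<and>
       (\<forall>T. transversal_set n L T \<longrightarrow> card (conflicts n L A \<inter> T) \<le> k) \<and>
       (\<forall>c\<in>cells n. real (card {C. allowed_3cube n L A C \<and> c \<in> C}) \<ge> \<alpha> * real n))"
proof -
  have n1: "real n \<ge> 1" using n_def by simp
  have t1: "0 \<le> 7 * real n ^ 2 * (real g) ^ k / fact k" by simp
  have "3 * real n ^ 3 * (2 * real g) ^ r / fact r < 1" using ineq t1 by linarith
  moreover have "real n ^ 3 \<ge> 1" using n1 by simp
  moreover have "0 \<le> (2 * real g) ^ r / fact r" by simp
  ultimately have q1: "(2 * real g) ^ r / fact r < 1"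
    by (smt (verit, ccfv_SIG) mult_le_cancel_right1 times_divide_eq_right mult.assoc)
  define m3 where "m3 = r + 1 - 2 * g"
  have h3: "real g ^ m3 / fact m3 \<le> (2 * real g) ^ r / fact r" unfolding m3_def by (rule R2[OF q1])
  have r2g: "2 * g \<le> r + 1"
  proof (cases "g = 0")
    case False
    hence "4 * g \<le> r" using R1'[OF _ q1] by simp
    thus ?thesis by simp
  qed simp
  have m3r: "real m3 = real r + 1 - 2 * real g" using r2g by (simp add: m3_def of_nat_diff)
  obtain t1 t2 t3 t4 where
    ts: "(t1,t2,t3,t4) \<in> Omega n" and
    e1: "\<forall>i\<in>{1..n}. \<forall>kk\<in>{1..n}. (t1,t2,t3,t4) \<notin> Erow n A k i kk" and
    e2: "\<forall>j\<in>{1..n}. \<forall>kk\<in>{1..n}. (t1,t2,t3,t4) \<notin> Ecol n A k j kk" and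
    e3: "\<forall>i\<in>{1..n}. \<forall>j\<in>{1..n}. (t1,t2,t3,t4) \<notin> Efile n A k i j" and
    e4: "\<forall>i\<in>{1..n}. \<forall>s\<in>{1..n}. (t1,t2,t3,t4) \<notin> Esym1 n A k i s" and
    e5: "\<forall>j\<in>{1..n}. \<forall>s\<in>{1..n}. (t1,t2,t3,t4) \<notin> Esym2 n A k j s" and
    e6: "\<forall>kk\<in>{1..n}. \<forall>s\<in>{1..n}. (t1,t2,t3,t4) \<notin> Esym3 n A k kk s" and
    e7: "\<forall>u\<in>{1..n}. \<forall>v\<in>{1..n}. (t1,t2,t3,t4) \<notin> Etr n A k u v" and
    e8: "\<forall>c1 c2 c3. (c1,c2,c3) \<in> cells n \<longrightarrow>
        (t1,t2,t3,t4) \<notin> Ef12 n A r c1 c2 c3 \<and> (t1,t2,t3,t4) \<notin> Ef3 n A m3 c1 c2 c3 \<and>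
        (\<forall>e\<in>{1..n}. (t1,t2,t3,t4) \<notin> Eb n A r c1 c2 c3 e)"
    using exists_good[OF n_def A ineq h3] by (elim exE conjE) (rule that; assumption)
  have tp: "t1 \<in> perms n" "t2 \<in> perms n" "t3 \<in> perms n" "t4 \<in> perms n" using ts by auto
  have perm: "t1 permutes {1..n}" "t2 permutes {1..n}" "t3 permutes {1..n}" "t4 permutes {1..n}"
    using tp by (auto simp: perms_def)
  let ?L = "apply_sigma t1 t2 t3 t4 boolean_cube"
  have pa: "\<forall>R\<in>rows n. card (conflicts n ?L A \<inter> R) \<le> k"
    using P_row[OF n_def tp _ e1] by blast
  have pb: "\<forall>R\<in>columns n. card (conflicts n ?L A \<inter> R) \<le> k"
    using P_col[OF n_def tp _ e2] by blast
  have pc: "\<forall>R\<in>files n. card (conflicts n ?L A \<inter> R) \<le> k"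
    using P_file[OF n_def tp _ e3] by blast
  have pd: "\<forall>S\<in>symbol_sets n ?L. card (conflicts n ?L A \<inter> S) \<le> k"
    using P_sym[OF n_def tp _ e4 e5 e6] by blast
  have pe: "\<forall>T. transversal_set n ?L T \<longrightarrow> card (conflicts n ?L A \<inter> T) \<le> k"
    using P_tr[OF n_def tp _ e7] by blast
  have an: "\<alpha> * real n = real n - 2 * real g - 3 * real r"
    using g_def r_def by (simp add: algebra_simps)
  have pf: "\<forall>c\<in>cells n. real (card {C. allowed_3cube n ?L A C \<and> c \<in> C}) \<ge> \<alpha> * real n"
  proof
    fix c assume c: "c \<in> cells n"
    obtain c1 c2 c3 where cc: "c = (c1,c2,c3)" by (cases c) blast
    have c': "(c1,c2,c3) \<in> cells n" using c cc by simp
    have c3N: "inv t3 c3 \<in> {1..n}" using perm_inv_in[OF tp(3)] c' by (auto simp: cells_def)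
    have ev: "(t1,t2,t3,t4) \<notin> Ef12 n A r c1 c2 c3" "(t1,t2,t3,t4) \<notin> Ef3 n A m3 c1 c2 c3"
      "(t1,t2,t3,t4) \<notin> Eb n A r c1 c2 c3 (inv t3 c3)" using e8 c' c3N by blast+
    have "real (card {C. allowed_3cube n ?L A C \<and> (c1,c2,c3) \<in> C})
       \<ge> real n - 1 - 4 * real g - (real r - 1) - (real r - 1) - (real m3 - 1)"
      by (rule P_f[OF n_def tp A c' ev])
    thus "real (card {C. allowed_3cube n ?L A C \<and> c \<in> C}) \<ge> \<alpha> * real n"
      using an m3r cc by simp
  qed
  show ?thesis
    apply (rule exI[of _ t1], rule exI[of _ t2], rule exI[of _ t3], rule exI[of _ t4])
    using perm pa pb pc pd pe pf by (simp add: Let_def)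
qed


end
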